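(* Let $\mathcal M$ be a small symmetric monoidal category. Then there is an isomorphism of short exact sequences of commutative monoids $$\begin{array}{ccccc} K(\mathrm{Pic}(\mathcal M)) & \xrightarrow{K(\iota_{\mathcal M})} & K(\mathcal M) & \xrightarrow{K(\pi_{\mathcal M})} & K(P(\mathcal M))\\ \downarrow\cong && \| && \downarrow\cong\\ U(K\mathcal M) & \longrightarrow & K(\mathcal M) & \longrightarrow & K(\mathcal M)/U(K\mathcal M)\end{array}$$ (commutative diagram with vertical isomorphisms and middle map the identity), where the bottom row consists of the inclusion and the quotient map. Moreover, writing $\mathrm{Pic}[\mathcal M]=K(\mathrm{Pic}(\mathcal M))$ and $\mathrm{Pure}[\mathcal M]=K(P(\mathcal M))$, the short exact sequence $\mathrm{Pic}[\mathcal M]\to K(\mathcal M)\to\mathrm{Pure}[\mathcal M]$ is a homotopy invariant of $\mathcal M$: any symmetric monoidal equivalence $\mathcal M\simeq\mathcal N$ induces an isomorphism between the corresponding exact sequences of $\mathcal M$ and $\mathcal N$.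
   Context: For a small symmetric monoidal category $\mathcal M$, $K(\mathcal M)$ is the commutative monoid of isomorphism classes $\langle X\rangle$ of objects of $\mathcal M$ with $\langle X\rangle\langle Y\rangle=\langle X\otimes Y\rangle$ and unit $\langle I\rangle$; $K$ is a functor on symmetric (strong) monoidal functors. An object $A$ is weakly invertible if $A\otimes B\cong B\otimes A\cong I$ for some $B$; $\mathrm{Pic}(\mathcal M)$ is the subcategory of weakly invertible objects and isomorphisms, and $\iota_{\mathcal M}$ its inclusion. $P(\mathcal M)$ is the symmetric monoidal category with the same objects as $\mathcal M$, morphisms $X\to Y$ the classes $[A,f]$ of pairs with $A$ weakly invertible and $f\colon X\to Y\otimes A$, where $(A,f)\sim(A',f')$ iff there is an isomorphism $\alpha\colon A\to A'$ with $(Y\otimes\alpha)f=f'$; composition $[B,g]\circ[A,f]=[B\otimes A,\ a_{Z,B,A}(g\otimes A)f]$, identities $[I,r_X^{-1}]$, tensor on objects as in $\mathcal M$, tensor of $[A,f]$ and $[A',f']$ equal to $[A\otimes A',g]$ with $g$ being $f\otimes f'$ followed by the canonical reassociation using the symmetry $b_{A,Y'}$ into $(Y\otimes Y')\otimes(A\otimes A')$, and structure isomorphisms the images under $\pi_{\mathcal M}$; $\pi_{\mathcal M}\colon\mathcal M\to P(\mathcal M)$ is identity on objects and $f\colon X\to Y$ goes to $[I,r_Y^{-1}f]$. For a commutative monoid $M$, $U(M)$ is the group of invertible elements, and $M/U(M)$ is the quotient of $M$ by the congruence $x\sim y\iff x=uy$ for some $u\in U(M)$; the sequence $U(M)\hookrightarrow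 M\to M/U(M)$ is the exact sequence of $M$ in the torsion theory on commutative monoids whose torsion objects are abelian groups and torsion-free objects are monoids whose only invertible element is the unit. *)

theory Defs
  imports "HOL-Algebra.Group"
begin

text \<open>A small category with a tensor structure: objects and morphisms are sets,
 src/tgt are domain and codomain, cmp g f is the composite g after f.
 sasc X Y Z : (X*Y)*Z -> X*(Y*Z), slun X : I*X -> X, srun X : X*I -> X,
 sbrd X Y : X*Y -> Y*X.\<close>

record ('o, 'm) smcat =
  ob :: "'o set"
  mor :: "'m set"
  src :: "'m \<Rightarrow> 'o"
  tgt :: "'m \<Rightarrow> 'o"
  cmp :: "'m \<Rightarrow> 'm \<Rightarrow> 'm"
  ident :: "'o \<Rightarrow> 'm"
  otens :: "'o \<Rightarrow> 'o \<Rightarrow> 'o"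
  mtens :: "'m \<Rightarrow> 'm \<Rightarrow> 'm"
  unitob :: "'o"
  sasc :: "'o \<Rightarrow> 'o \<Rightarrow> 'o \<Rightarrow> 'm"
  slun :: "'o \<Rightarrow> 'm"
  srun :: "'o \<Rightarrow> 'm"
  sbrd :: "'o \<Rightarrow> 'o \<Rightarrow> 'm"

definition hom_in :: "('o,'m,'z) smcat_scheme \<Rightarrow> 'm \<Rightarrow> 'o \<Rightarrow> 'o \<Rightarrow> bool" where
  "hom_in C f X Y \<longleftrightarrow> f \<in> mor C \<and> src C f = X \<and> tgt C f = Y"

definition iso_in :: "('o,'m,'z) smcat_scheme \<Rightarrow> 'm \<Rightarrow> bool" where
  "iso_in C f \<longleftrightarrow> f \<in> mor C \<and> (\<exists>g \<in> mor C. src C g = tgt C f \<and> tgt C g = src C f \<and>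
      cmp C g f = ident C (src C f) \<and> cmp C f g = ident C (tgt C f))"

definition inv_in :: "('o,'m,'z) smcat_scheme \<Rightarrow> 'm \<Rightarrow> 'm" where
  "inv_in C f = (SOME g. g \<in> mor C \<and> src C g = tgt C f \<and> tgt C g = src C f \<and>
      cmp C g f = ident C (src C f) \<and> cmp C f g = ident C (tgt C f))"

definition isomorphic :: "('o,'m,'z) smcat_scheme \<Rightarrow> 'o \<Rightarrow> 'o \<Rightarrow> bool" where
  "isomorphic C X Y \<longleftrightarrow> (\<exists>f. hom_in C f X Y \<and> iso_in C f)"

definition is_category :: "('o,'m,'z) smcat_scheme \<Rightarrow> bool" where
  "is_category C \<longleftrightarrow>
     (\<forall>f \<in> mor C. src C f \<in> ob C \<and> tgt C f \<in> ob C) \<and>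
     (\<forall>X \<in> ob C. hom_in C (ident C X) X X) \<and>
     (\<forall>f \<in> mor C. \<forall>g \<in> mor C. tgt C f = src C g \<longrightarrow> hom_in C (cmp C g f) (src C f) (tgt C g)) \<and>
     (\<forall>f \<in> mor C. cmp C (ident C (tgt C f)) f = f \<and> cmp C f (ident C (src C f)) = f) \<and>
     (\<forall>f \<in> mor C. \<forall>g \<in> mor C. \<forall>h \<in> mor C. tgt C f = src C g \<and> tgt C g = src C h \<longrightarrow>
        cmp C h (cmp C g f) = cmp C (cmp C h g) f)"

definition sym_mon_cat :: "('o,'m,'z) smcat_scheme \<Rightarrow> bool" where
  "sym_mon_cat C \<longleftrightarrow> is_category C \<and>
   \<comment> \<open>tensor bifunctor\<close>
   unitob C \<in> ob C \<and>
   (\<forall>X \<in> ob C. \<forall>Y \<in> ob C. otens C X Y \<in> ob C) \<and>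
   (\<forall>f \<in> mor C. \<forall>g \<in> mor C. hom_in C (mtens C f g) (otens C (src C f) (src C g)) (otens C (tgt C f) (tgt C g))) \<and>
   (\<forall>X \<in> ob C. \<forall>Y \<in> ob C. mtens C (ident C X) (ident C Y) = ident C (otens C X Y)) \<and>
   (\<forall>f \<in> mor C. \<forall>g \<in> mor C. \<forall>f' \<in> mor C. \<forall>g' \<in> mor C. tgt C f = src C g \<and> tgt C f' = src C g' \<longrightarrow>
      mtens C (cmp C g f) (cmp C g' f') = cmp C (mtens C g g') (mtens C f f')) \<and>
   \<comment> \<open>structure isomorphisms\<close>
   (\<forall>X \<in> ob C. \<forall>Y \<in> ob C. \<forall>Z \<in> ob C.
      hom_in C (sasc C X Y Z) (otens C (otens C X Y) Z) (otens C X (otens C Y Z)) \<and> iso_in C (sasc C X Y Z)) \<and>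
   (\<forall>X \<in> ob C. hom_in C (slun C X) (otens C (unitob C) X) X \<and> iso_in C (slun C X)) \<and>
   (\<forall>X \<in> ob C. hom_in C (srun C X) (otens C X (unitob C)) X \<and> iso_in C (srun C X)) \<and>
   (\<forall>X \<in> ob C. \<forall>Y \<in> ob C. hom_in C (sbrd C X Y) (otens C X Y) (otens C Y X) \<and> iso_in C (sbrd C X Y)) \<and>
   \<comment> \<open>naturality\<close>
   (\<forall>f \<in> mor C. \<forall>g \<in> mor C. \<forall>h \<in> mor C.
      cmp C (sasc C (tgt C f) (tgt C g) (tgt C h)) (mtens C (mtens C f g) h)
      = cmp C (mtens C f (mtens C g h)) (sasc C (src C f) (src C g) (src C h))) \<and>
   (\<forall>f \<in> mor C. cmp C (slun C (tgt C f)) (mtens C (ident C (unitob C)) f) = cmp C f (slun C (src C f))) \<and>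
   (\<forall>f \<in> mor C. cmp C (srun C (tgt C f)) (mtens C f (ident C (unitob C))) = cmp C f (srun C (src C f))) \<and>
   (\<forall>f \<in> mor C. \<forall>g \<in> mor C.
      cmp C (sbrd C (tgt C f) (tgt C g)) (mtens C f g) = cmp C (mtens C g f) (sbrd C (src C f) (src C g))) \<and>
   \<comment> \<open>pentagon\<close>
   (\<forall>W \<in> ob C. \<forall>X \<in> ob C. \<forall>Y \<in> ob C. \<forall>Z \<in> ob C.
      cmp C (sasc C W X (otens C Y Z)) (sasc C (otens C W X) Y Z)
      = cmp C (mtens C (ident C W) (sasc C X Y Z))
          (cmp C (sasc C W (otens C X Y) Z) (mtens C (sasc C W X Y) (ident C Z)))) \<and>
   \<comment> \<open>triangle\<close>
   (\<forall>X \<in> ob C. \<forall>Y \<in> ob C.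
      cmp C (mtens C (ident C X) (slun C Y)) (sasc C X (unitob C) Y) = mtens C (srun C X) (ident C Y)) \<and>
   \<comment> \<open>hexagon\<close>
   (\<forall>X \<in> ob C. \<forall>Y \<in> ob C. \<forall>Z \<in> ob C.
      cmp C (sasc C Y Z X) (cmp C (sbrd C X (otens C Y Z)) (sasc C X Y Z))
      = cmp C (mtens C (ident C Y) (sbrd C X Z))
          (cmp C (sasc C Y X Z) (mtens C (sbrd C X Y) (ident C Z)))) \<and>
   \<comment> \<open>symmetry\<close>
   (\<forall>X \<in> ob C. \<forall>Y \<in> ob C. cmp C (sbrd C Y X) (sbrd C X Y) = ident C (otens C X Y))"

record ('o, 'm, 'p, 'n) smfun =
  fob :: "'o \<Rightarrow> 'p"
  fmor :: "'m \<Rightarrow> 'n"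
  fphi0 :: "'n"
  fphi2 :: "'o \<Rightarrow> 'o \<Rightarrow> 'n"

definition sym_mon_functor ::
  "('o,'m) smcat \<Rightarrow> ('p,'n) smcat \<Rightarrow> ('o,'m,'p,'n) smfun \<Rightarrow> bool" where
  "sym_mon_functor C D F \<longleftrightarrow>
   (\<forall>X \<in> ob C. fob F X \<in> ob D) \<and>
   (\<forall>f \<in> mor C. hom_in D (fmor F f) (fob F (src C f)) (fob F (tgt C f))) \<and>
   (\<forall>X \<in> ob C. fmor F (ident C X) = ident D (fob F X)) \<and>
   (\<forall>f \<in> mor C. \<forall>g \<in> mor C. tgt C f = src C g \<longrightarrow> fmor F (cmp C g f) = cmp D (fmor F g) (fmor F f)) \<and>
   hom_in D (fphi0 F) (unitob D) (fob F (unitob C)) \<and> iso_in D (fphi0 F) \<and>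
   (\<forall>X \<in> ob C. \<forall>Y \<in> ob C. hom_in D (fphi2 F X Y) (otens D (fob F X) (fob F Y)) (fob F (otens C X Y))
       \<and> iso_in D (fphi2 F X Y)) \<and>
   (\<forall>f \<in> mor C. \<forall>g \<in> mor C.
      cmp D (fmor F (mtens C f g)) (fphi2 F (src C f) (src C g))
      = cmp D (fphi2 F (tgt C f) (tgt C g)) (mtens D (fmor F f) (fmor F g))) \<and>
   (\<forall>X \<in> ob C. \<forall>Y \<in> ob C. \<forall>Z \<in> ob C.
      cmp D (fmor F (sasc C X Y Z))
        (cmp D (fphi2 F (otens C X Y) Z) (mtens D (fphi2 F X Y) (ident D (fob F Z))))
      = cmp D (fphi2 F X (otens C Y Z))
        (cmp D (mtens D (ident D (fob F X)) (fphi2 F Y Z)) (sasc D (fob F X) (fob F Y) (fob F Z)))) \<and>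
   (\<forall>X \<in> ob C.
      cmp D (fmor F (slun C X)) (cmp D (fphi2 F (unitob C) X) (mtens D (fphi0 F) (ident D (fob F X))))
      = slun D (fob F X)) \<and>
   (\<forall>X \<in> ob C.
      cmp D (fmor F (srun C X)) (cmp D (fphi2 F X (unitob C)) (mtens D (ident D (fob F X)) (fphi0 F)))
      = srun D (fob F X)) \<and>
   (\<forall>X \<in> ob C. \<forall>Y \<in> ob C.
      cmp D (fmor F (sbrd C X Y)) (fphi2 F X Y) = cmp D (fphi2 F Y X) (sbrd D (fob F X) (fob F Y)))"

definition sym_mon_equiv ::
  "('o,'m) smcat \<Rightarrow> ('p,'n) smcat \<Rightarrow> ('o,'m,'p,'n) smfun \<Rightarrow> bool" where
  "sym_mon_equiv C D F \<longleftrightarrow> sym_mon_functor C D F \<and>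
   (\<forall>X \<in> ob C. \<forall>Y \<in> ob C. \<forall>g. hom_in D g (fob F X) (fob F Y) \<longrightarrow> (\<exists>f. hom_in C f X Y \<and> fmor F f = g)) \<and>
   (\<forall>X \<in> ob C. \<forall>Y \<in> ob C. \<forall>f f'. hom_in C f X Y \<and> hom_in C f' X Y \<and> fmor F f = fmor F f' \<longrightarrow> f = f') \<and>
   (\<forall>Y \<in> ob D. \<exists>X \<in> ob C. isomorphic D (fob F X) Y)"

definition iso_class :: "('o,'m,'z) smcat_scheme \<Rightarrow> 'o \<Rightarrow> 'o set" where
  "iso_class C X = {Y \<in> ob C. isomorphic C X Y}"

definition Kmon :: "('o,'m,'z) smcat_scheme \<Rightarrow> 'o set monoid" where
  "Kmon C = \<lparr> carrier = iso_class C ` ob C,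
              mult = (\<lambda>a b. iso_class C (otens C (SOME x. x \<in> a) (SOME y. y \<in> b))),
              one = iso_class C (unitob C) \<rparr>"

definition Kmap :: "('o,'m,'z) smcat_scheme \<Rightarrow> ('p,'n,'y) smcat_scheme \<Rightarrow> ('o \<Rightarrow> 'p) \<Rightarrow> 'o set \<Rightarrow> 'p set" where
  "Kmap C D Fo a = iso_class D (Fo (SOME x. x \<in> a))"

definition weakly_invertible :: "('o,'m,'z) smcat_scheme \<Rightarrow> 'o \<Rightarrow> bool" where
  "weakly_invertible C A \<longleftrightarrow> A \<in> ob C \<and>
     (\<exists>B \<in> ob C. isomorphic C (otens C A B) (unitob C) \<and> isomorphic C (otens C B A) (unitob C))"

definition PicCat :: "('o,'m) smcat \<Rightarrow> ('o,'m) smcat" where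
  "PicCat C = C\<lparr> ob := {A. weakly_invertible C A},
                 mor := {f \<in> mor C. iso_in C f \<and> weakly_invertible C (src C f) \<and> weakly_invertible C (tgt C f)} \<rparr>"

text \<open>The class [A,f] of a pair (A,f) with f : X -> Y * A.\<close>

definition Pcls :: "('o,'m) smcat \<Rightarrow> 'o \<Rightarrow> 'o \<Rightarrow> 'o \<Rightarrow> 'm \<Rightarrow> ('o \<times> 'm) set" where
  "Pcls C X Y A f = {(A', f'). weakly_invertible C A' \<and> hom_in C f' X (otens C Y A') \<and>
      (\<exists>\<alpha>. hom_in C \<alpha> A A' \<and> iso_in C \<alpha> \<and> cmp C (mtens C (ident C Y) \<alpha>) f = f')}"

definition Pmor :: "('o,'m) smcat \<Rightarrow> ('o \<times> 'o \<times> ('o \<times> 'm) set) set" where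
  "Pmor C = {(X, Y, Pcls C X Y A f) | X Y A f. X \<in> ob C \<and> Y \<in> ob C \<and> weakly_invertible C A \<and>
      hom_in C f X (otens C Y A)}"

definition rep :: "'a set \<Rightarrow> 'a" where
  "rep c = (SOME p. p \<in> c)"

definition Pcmp :: "('o,'m) smcat \<Rightarrow> ('o \<times> 'o \<times> ('o \<times> 'm) set) \<Rightarrow> ('o \<times> 'o \<times> ('o \<times> 'm) set)
    \<Rightarrow> ('o \<times> 'o \<times> ('o \<times> 'm) set)" where
  "Pcmp C q p =
    (let X = fst p; A = fst (rep (snd (snd p))); f = snd (rep (snd (snd p)));
         Z = fst (snd q); B = fst (rep (snd (snd q))); g = snd (rep (snd (snd q)))
     in (X, Z, Pcls C X Z (otens C B A) (cmp C (sasc C Z B A) (cmp C (mtens C g (ident C A)) f))))"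

definition Pid :: "('o,'m) smcat \<Rightarrow> 'o \<Rightarrow> ('o \<times> 'o \<times> ('o \<times> 'm) set)" where
  "Pid C X = (X, X, Pcls C X X (unitob C) (inv_in C (srun C X)))"

text \<open>Canonical reassociation (Y*A)*(Y'*A') -> (Y*Y')*(A*A') using the symmetry b_{A,Y'}.\<close>

definition reassoc :: "('o,'m) smcat \<Rightarrow> 'o \<Rightarrow> 'o \<Rightarrow> 'o \<Rightarrow> 'o \<Rightarrow> 'm" where
  "reassoc C Y A Y' A' =
     cmp C (inv_in C (sasc C Y Y' (otens C A A')))
    (cmp C (mtens C (ident C Y) (sasc C Y' A A'))
    (cmp C (mtens C (ident C Y) (mtens C (sbrd C A Y') (ident C A')))
    (cmp C (mtens C (ident C Y) (inv_in C (sasc C A Y' A')))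
           (sasc C Y A (otens C Y' A')))))"

definition Ptens :: "('o,'m) smcat \<Rightarrow> ('o \<times> 'o \<times> ('o \<times> 'm) set) \<Rightarrow> ('o \<times> 'o \<times> ('o \<times> 'm) set)
    \<Rightarrow> ('o \<times> 'o \<times> ('o \<times> 'm) set)" where
  "Ptens C p p' =
    (let X = fst p; Y = fst (snd p); A = fst (rep (snd (snd p))); f = snd (rep (snd (snd p)));
         X' = fst p'; Y' = fst (snd p'); A' = fst (rep (snd (snd p'))); f' = snd (rep (snd (snd p')))
     in (otens C X X', otens C Y Y',
         Pcls C (otens C X X') (otens C Y Y') (otens C A A') (cmp C (reassoc C Y A Y' A') (mtens C f f'))))"

definition Ppi :: "('o,'m) smcat \<Rightarrow> 'm \<Rightarrow> ('o \<times> 'o \<times> ('o \<times> 'm) set)" where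
  "Ppi C f = (src C f, tgt C f,
      Pcls C (src C f) (tgt C f) (unitob C) (cmp C (inv_in C (srun C (tgt C f))) f))"

definition PCat :: "('o,'m) smcat \<Rightarrow> ('o, 'o \<times> 'o \<times> ('o \<times> 'm) set) smcat" where
  "PCat C = \<lparr> ob = ob C, mor = Pmor C, src = fst, tgt = (\<lambda>p. fst (snd p)),
     cmp = Pcmp C, ident = Pid C, otens = otens C, mtens = Ptens C, unitob = unitob C,
     sasc = (\<lambda>X Y Z. Ppi C (sasc C X Y Z)), slun = (\<lambda>X. Ppi C (slun C X)),
     srun = (\<lambda>X. Ppi C (srun C X)), sbrd = (\<lambda>X Y. Ppi C (sbrd C X Y)) \<rparr>"

definition Ucls :: "('a,'b) monoid_scheme \<Rightarrow> 'a \<Rightarrow> 'a set" where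
  "Ucls G x = {y \<in> carrier G. \<exists>u \<in> Units G. y = u \<otimes>\<^bsub>G\<^esub> x}"

definition Umod :: "('a,'b) monoid_scheme \<Rightarrow> 'a set monoid" where
  "Umod G = \<lparr> carrier = Ucls G ` carrier G,
              mult = (\<lambda>a b. Ucls G ((SOME x. x \<in> a) \<otimes>\<^bsub>G\<^esub> (SOME y. y \<in> b))),
              one = Ucls G \<one>\<^bsub>G\<^esub> \<rparr>"

end

theory Submission
  imports Defs
begin

locale smc =
  fixes M :: "('o,'m) smcat"
  assumes smc: "sym_mon_cat M"
begin

abbreviation cp (infixr "\<bullet>" 55) where "g \<bullet> f \<equiv> cmp M g f"
abbreviation tn (infixl "\<diamond>" 65) where "f \<diamond> g \<equiv> mtens M f g"
abbreviation ot (infixl "\<odot>" 65) where "X \<odot> Y \<equiv> otens M X Y"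
abbreviation idm where "idm X \<equiv> ident M X"
abbreviation iv where "iv f \<equiv> inv_in M f"
abbreviation I where "I \<equiv> unitob M"
abbreviation asc where "asc \<equiv> sasc M"
abbreviation lu where "lu \<equiv> slun M"
abbreviation ru where "ru \<equiv> srun M"
abbreviation br where "br \<equiv> sbrd M"
abbreviation isoi where "isoi f \<equiv> iso_in M f"

lemma ax: "is_category M"
  "unitob M \<in> ob M"
  "(\<forall>X \<in> ob M. \<forall>Y \<in> ob M. otens M X Y \<in> ob M)"
  "(\<forall>f \<in> mor M. \<forall>g \<in> mor M. hom_in M (mtens M f g) (otens M (src M f) (src M g)) (otens M (tgt M f) (tgt M g)))"
  "(\<forall>X \<in> ob M. \<forall>Y \<in> ob M. mtens M (ident M X) (ident M Y) = ident M (otens M X Y))"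
  "(\<forall>f \<in> mor M. \<forall>g \<in> mor M. \<forall>f' \<in> mor M. \<forall>g' \<in> mor M. tgt M f = src M g \<and> tgt M f' = src M g' \<longrightarrow> mtens M (cmp M g f) (cmp M g' f') = cmp M (mtens M g g') (mtens M f f'))"
  "(\<forall>X \<in> ob M. \<forall>Y \<in> ob M. \<forall>Z \<in> ob M. hom_in M (sasc M X Y Z) (otens M (otens M X Y) Z) (otens M X (otens M Y Z)) \<and> iso_in M (sasc M X Y Z))"
  "(\<forall>X \<in> ob M. hom_in M (slun M X) (otens M (unitob M) X) X \<and> iso_in M (slun M X))"
  "(\<forall>X \<in> ob M. hom_in M (srun M X) (otens M X (unitob M)) X \<and> iso_in M (srun M X))"
  "(\<forall>X \<in> ob M. \<forall>Y \<in> ob M. hom_in M (sbrd M X Y) (otens M X Y) (otens M Y X) \<and> iso_in M (sbrd M X Y))"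
  "(\<forall>f \<in> mor M. \<forall>g \<in> mor M. \<forall>h \<in> mor M. cmp M (sasc M (tgt M f) (tgt M g) (tgt M h)) (mtens M (mtens M f g) h) = cmp M (mtens M f (mtens M g h)) (sasc M (src M f) (src M g) (src M h)))"
  "(\<forall>f \<in> mor M. cmp M (slun M (tgt M f)) (mtens M (ident M (unitob M)) f) = cmp M f (slun M (src M f)))"
  "(\<forall>f \<in> mor M. cmp M (srun M (tgt M f)) (mtens M f (ident M (unitob M))) = cmp M f (srun M (src M f)))"
  "(\<forall>f \<in> mor M. \<forall>g \<in> mor M. cmp M (sbrd M (tgt M f) (tgt M g)) (mtens M f g) = cmp M (mtens M g f) (sbrd M (src M f) (src M g)))"
  "(\<forall>W \<in> ob M. \<forall>X \<in> ob M. \<forall>Y \<in> ob M. \<forall>Z \<in> ob M. cmp M (sasc M W X (otens M Y Z)) (sasc M (otens M W X) Y Z) = cmp M (mtens M (ident M W) (sasc M X Y Z)) (cmp M (sasc M W (otens M X Y) Z) (mtens M (sasc M W X Y) (ident M Z))))"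
  "(\<forall>X \<in> ob M. \<forall>Y \<in> ob M. cmp M (mtens M (ident M X) (slun M Y)) (sasc M X (unitob M) Y) = mtens M (srun M X) (ident M Y))"
  "(\<forall>X \<in> ob M. \<forall>Y \<in> ob M. \<forall>Z \<in> ob M. cmp M (sasc M Y Z X) (cmp M (sbrd M X (otens M Y Z)) (sasc M X Y Z)) = cmp M (mtens M (ident M Y) (sbrd M X Z)) (cmp M (sasc M Y X Z) (mtens M (sbrd M X Y) (ident M Z))))"
  "(\<forall>X \<in> ob M. \<forall>Y \<in> ob M. cmp M (sbrd M Y X) (sbrd M X Y) = ident M (otens M X Y))"
  by (insert smc, unfold sym_mon_cat_def) simp_all

lemma cax: "(\<forall>f \<in> mor M. src M f \<in> ob M \<and> tgt M f \<in> ob M)"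
     "(\<forall>X \<in> ob M. hom_in M (ident M X) X X)"
     "(\<forall>f \<in> mor M. \<forall>g \<in> mor M. tgt M f = src M g \<longrightarrow> hom_in M (cmp M g f) (src M f) (tgt M g))"
     "(\<forall>f \<in> mor M. cmp M (ident M (tgt M f)) f = f \<and> cmp M f (ident M (src M f)) = f)"
     "(\<forall>f \<in> mor M. \<forall>g \<in> mor M. \<forall>h \<in> mor M. tgt M f = src M g \<and> tgt M g = src M h \<longrightarrow>
        cmp M h (cmp M g f) = cmp M (cmp M h g) f)"
  by (insert ax(1), unfold is_category_def) simp_all

lemma ob_src[simp]: "f \<in> mor M \<Longrightarrow> src M f \<in> ob M" and ob_tgt[simp]: "f \<in> mor M \<Longrightarrow> tgt M f \<in> ob M"
  using cax(1)[rule_format] by auto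

lemma unit_ob[simp]: "I \<in> ob M" using ax(2)[rule_format] .
lemma ot_ob[simp]: "X \<in> ob M \<Longrightarrow> Y \<in> ob M \<Longrightarrow> X \<odot> Y \<in> ob M" using ax(3) by blast

lemma id_mor[simp]: "X \<in> ob M \<Longrightarrow> idm X \<in> mor M" "X \<in> ob M \<Longrightarrow> src M (idm X) = X" "X \<in> ob M \<Longrightarrow> tgt M (idm X) = X"
  using cax(2)[rule_format] unfolding hom_in_def by auto

lemma cmp_mor[simp]: "f \<in> mor M \<Longrightarrow> g \<in> mor M \<Longrightarrow> tgt M f = src M g \<Longrightarrow> g \<bullet> f \<in> mor M"
  "f \<in> mor M \<Longrightarrow> g \<in> mor M \<Longrightarrow> tgt M f = src M g \<Longrightarrow> src M (g \<bullet> f) = src M f"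
  "f \<in> mor M \<Longrightarrow> g \<in> mor M \<Longrightarrow> tgt M f = src M g \<Longrightarrow> tgt M (g \<bullet> f) = tgt M g"
  using cax(3)[rule_format] unfolding hom_in_def by auto

lemma id_l[simp]: "f \<in> mor M \<Longrightarrow> tgt M f = Y \<Longrightarrow> idm Y \<bullet> f = f"
  and id_r[simp]: "f \<in> mor M \<Longrightarrow> src M f = X \<Longrightarrow> f \<bullet> idm X = f"
  using cax(4)[rule_format] by auto

lemma assoc[simp]: "f \<in> mor M \<Longrightarrow> g \<in> mor M \<Longrightarrow> h \<in> mor M \<Longrightarrow> tgt M f = src M g \<Longrightarrow> tgt M g = src M h \<Longrightarrow>
   (h \<bullet> g) \<bullet> f = h \<bullet> (g \<bullet> f)"
  using cax(5)[rule_format] by metis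

lemma tn_mor[simp]: "f \<in> mor M \<Longrightarrow> g \<in> mor M \<Longrightarrow> f \<diamond> g \<in> mor M"
  "f \<in> mor M \<Longrightarrow> g \<in> mor M \<Longrightarrow> src M (f \<diamond> g) = src M f \<odot> src M g"
  "f \<in> mor M \<Longrightarrow> g \<in> mor M \<Longrightarrow> tgt M (f \<diamond> g) = tgt M f \<odot> tgt M g"
  using ax(4)[rule_format] unfolding hom_in_def by auto

lemma tn_id[simp]: "X \<in> ob M \<Longrightarrow> Y \<in> ob M \<Longrightarrow> idm X \<diamond> idm Y = idm (X \<odot> Y)"
  using ax(5) by blast

lemma interchange: "f \<in> mor M \<Longrightarrow> g \<in> mor M \<Longrightarrow> f' \<in> mor M \<Longrightarrow> g' \<in> mor M \<Longrightarrow> tgt M f = src M g \<Longrightarrow> tgt M f' = src M g' \<Longrightarrow>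
      (g \<bullet> f) \<diamond> (g' \<bullet> f') = (g \<diamond> g') \<bullet> (f \<diamond> f')"
  using ax(6) by blast

lemma asc_mor[simp]: "X \<in> ob M \<Longrightarrow> Y \<in> ob M \<Longrightarrow> Z \<in> ob M \<Longrightarrow> asc X Y Z \<in> mor M"
  "X \<in> ob M \<Longrightarrow> Y \<in> ob M \<Longrightarrow> Z \<in> ob M \<Longrightarrow> src M (asc X Y Z) = X \<odot> Y \<odot> Z"
  "X \<in> ob M \<Longrightarrow> Y \<in> ob M \<Longrightarrow> Z \<in> ob M \<Longrightarrow> tgt M (asc X Y Z) = X \<odot> (Y \<odot> Z)"
  "X \<in> ob M \<Longrightarrow> Y \<in> ob M \<Longrightarrow> Z \<in> ob M \<Longrightarrow> isoi (asc X Y Z)"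
  using ax(7)[rule_format, of X Y Z] unfolding hom_in_def by auto

lemma lu_mor[simp]: "X \<in> ob M \<Longrightarrow> lu X \<in> mor M" "X \<in> ob M \<Longrightarrow> src M (lu X) = I \<odot> X"
  "X \<in> ob M \<Longrightarrow> tgt M (lu X) = X" "X \<in> ob M \<Longrightarrow> isoi (lu X)"
  using ax(8)[rule_format, of X] unfolding hom_in_def by auto

lemma ru_mor[simp]: "X \<in> ob M \<Longrightarrow> ru X \<in> mor M" "X \<in> ob M \<Longrightarrow> src M (ru X) = X \<odot> I"
  "X \<in> ob M \<Longrightarrow> tgt M (ru X) = X" "X \<in> ob M \<Longrightarrow> isoi (ru X)"
  using ax(9)[rule_format, of X] unfolding hom_in_def by auto

lemma br_mor[simp]: "X \<in> ob M \<Longrightarrow> Y \<in> ob M \<Longrightarrow> br X Y \<in> mor M"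
  "X \<in> ob M \<Longrightarrow> Y \<in> ob M \<Longrightarrow> src M (br X Y) = X \<odot> Y"
  "X \<in> ob M \<Longrightarrow> Y \<in> ob M \<Longrightarrow> tgt M (br X Y) = Y \<odot> X"
  "X \<in> ob M \<Longrightarrow> Y \<in> ob M \<Longrightarrow> isoi (br X Y)"
  using ax(10)[rule_format, of X Y] unfolding hom_in_def by auto

lemma iso_mor[simp]: "isoi f \<Longrightarrow> f \<in> mor M" unfolding iso_in_def by auto

lemma iv_props: assumes "isoi f"
  shows "iv f \<in> mor M \<and> src M (iv f) = tgt M f \<and> tgt M (iv f) = src M f \<and>
      iv f \<bullet> f = idm (src M f) \<and> f \<bullet> iv f = idm (tgt M f)"
proof -
  from assms obtain g where "g \<in> mor M \<and> src M g = tgt M f \<and> tgt M g = src M f \<and>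
      g \<bullet> f = idm (src M f) \<and> f \<bullet> g = idm (tgt M f)" unfolding iso_in_def by blast
  then show ?thesis unfolding inv_in_def by (rule someI)
qed

lemma iv_mor[simp]: "isoi f \<Longrightarrow> iv f \<in> mor M" "isoi f \<Longrightarrow> src M (iv f) = tgt M f" "isoi f \<Longrightarrow> tgt M (iv f) = src M f"
  using iv_props by auto

lemma iv_l[simp]: "isoi f \<Longrightarrow> src M f = X \<Longrightarrow> iv f \<bullet> f = idm X"
  and iv_r[simp]: "isoi f \<Longrightarrow> tgt M f = Y \<Longrightarrow> f \<bullet> iv f = idm Y"
  using iv_props by auto

lemma iv_l2[simp]: "isoi f \<Longrightarrow> h \<in> mor M \<Longrightarrow> tgt M h = src M f \<Longrightarrow> iv f \<bullet> (f \<bullet> h) = h"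
proof -
  assume a: "isoi f" "h \<in> mor M" "tgt M h = src M f"
  have "iv f \<bullet> (f \<bullet> h) = (iv f \<bullet> f) \<bullet> h" using a by (subst assoc) auto
  also have "\<dots> = h" using a by (simp del: assoc)
  finally show ?thesis .
qed

lemma iv_r2[simp]: "isoi f \<Longrightarrow> h \<in> mor M \<Longrightarrow> tgt M h = tgt M f \<Longrightarrow> f \<bullet> (iv f \<bullet> h) = h"
proof -
  assume a: "isoi f" "h \<in> mor M" "tgt M h = tgt M f"
  have "f \<bullet> (iv f \<bullet> h) = (f \<bullet> iv f) \<bullet> h" using a by (subst assoc) auto
  also have "\<dots> = h" using a by (simp del: assoc)
  finally show ?thesis .
qed

lemma iso_intro: "f \<in> mor M \<Longrightarrow> g \<in> mor M \<Longrightarrow> src M g = tgt M f \<Longrightarrow> tgt M g = src M f \<Longrightarrow>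
   g \<bullet> f = idm (src M f) \<Longrightarrow> f \<bullet> g = idm (tgt M f) \<Longrightarrow> isoi f"
  unfolding iso_in_def by blast

lemma iv_unique: assumes "isoi f" "g \<in> mor M" "src M g = tgt M f" "tgt M g = src M f" "g \<bullet> f = idm (src M f)"
  shows "iv f = g"
proof -
  have "g = g \<bullet> (f \<bullet> iv f)" using assms by simp
  also have "\<dots> = (g \<bullet> f) \<bullet> iv f" using assms by (subst assoc) auto
  also have "\<dots> = iv f" using assms by simp
  finally have "g = iv f" .
  then show ?thesis by (rule sym)
qed

lemma iso_iv[simp]: "isoi f \<Longrightarrow> isoi (iv f)"
  by (rule iso_intro[of _ f]) auto

lemma iv_iv[simp]: "isoi f \<Longrightarrow> iv (iv f) = f"
  by (rule iv_unique) auto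

lemma iso_id[simp]: "X \<in> ob M \<Longrightarrow> isoi (idm X)"
  by (rule iso_intro[of _ "idm X"]) auto

lemma iv_id[simp]: "X \<in> ob M \<Longrightarrow> iv (idm X) = idm X"
  by (rule iv_unique) auto

lemma iso_cmp[simp]: "isoi f \<Longrightarrow> isoi g \<Longrightarrow> tgt M f = src M g \<Longrightarrow> isoi (g \<bullet> f)"
  by (rule iso_intro[of _ "iv f \<bullet> iv g"]) auto

lemma iv_cmp[simp]: "isoi f \<Longrightarrow> isoi g \<Longrightarrow> tgt M f = src M g \<Longrightarrow> iv (g \<bullet> f) = iv f \<bullet> iv g"
  by (rule iv_unique) auto

lemma isoi_tn[simp]: assumes "isoi f" "isoi g" shows "isoi (f \<diamond> g)"
proof (rule iso_intro[of _ "iv f \<diamond> iv g"])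
  show "(iv f \<diamond> iv g) \<bullet> (f \<diamond> g) = idm (src M (f \<diamond> g))"
    using assms by (simp flip: interchange)
  show "(f \<diamond> g) \<bullet> (iv f \<diamond> iv g) = idm (tgt M (f \<diamond> g))"
    using assms by (simp flip: interchange)
qed (use assms in auto)

lemma iv_tn[simp]: assumes "isoi f" "isoi g" shows "iv (f \<diamond> g) = iv f \<diamond> iv g"
  by (rule iv_unique) (use assms in \<open>auto simp flip: interchange\<close>)


lemma asc_nat: "f \<in> mor M \<Longrightarrow> g \<in> mor M \<Longrightarrow> h \<in> mor M \<Longrightarrow>
  asc (tgt M f) (tgt M g) (tgt M h) \<bullet> (f \<diamond> g \<diamond> h) = (f \<diamond> (g \<diamond> h)) \<bullet> asc (src M f) (src M g) (src M h)"
  using ax(11) by blast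
lemma lu_nat: "f \<in> mor M \<Longrightarrow> lu (tgt M f) \<bullet> (idm I \<diamond> f) = f \<bullet> lu (src M f)"
  using ax(12) by blast
lemma ru_nat: "f \<in> mor M \<Longrightarrow> ru (tgt M f) \<bullet> (f \<diamond> idm I) = f \<bullet> ru (src M f)"
  using ax(13) by blast
lemma br_nat: "f \<in> mor M \<Longrightarrow> g \<in> mor M \<Longrightarrow> br (tgt M f) (tgt M g) \<bullet> (f \<diamond> g) = (g \<diamond> f) \<bullet> br (src M f) (src M g)"
  using ax(14) by blast
lemma pentagon: "W \<in> ob M \<Longrightarrow> X \<in> ob M \<Longrightarrow> Y \<in> ob M \<Longrightarrow> Z \<in> ob M \<Longrightarrow>
  asc W X (Y \<odot> Z) \<bullet> asc (W \<odot> X) Y Z = (idm W \<diamond> asc X Y Z) \<bullet> (asc W (X \<odot> Y) Z \<bullet> (asc W X Y \<diamond> idm Z))"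
  using ax(15) by blast
lemma triangle: "X \<in> ob M \<Longrightarrow> Y \<in> ob M \<Longrightarrow> (idm X \<diamond> lu Y) \<bullet> asc X I Y = ru X \<diamond> idm Y"
  using ax(16) by blast
lemma symm: "X \<in> ob M \<Longrightarrow> Y \<in> ob M \<Longrightarrow> br Y X \<bullet> br X Y = idm (X \<odot> Y)"
  using ax(18) by blast

lemma isomorphic_iff: "isomorphic M X Y \<longleftrightarrow> (\<exists>f. f \<in> mor M \<and> src M f = X \<and> tgt M f = Y \<and> isoi f)"
  unfolding isomorphic_def hom_in_def by auto

lemma isoI: "isoi f \<Longrightarrow> src M f = X \<Longrightarrow> tgt M f = Y \<Longrightarrow> isomorphic M X Y"
  unfolding isomorphic_iff using iso_mor by blast

lemma isoE: assumes "isomorphic M X Y"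
  obtains f where "f \<in> mor M" "src M f = X" "tgt M f = Y" "isoi f"
  using assms unfolding isomorphic_iff by auto

lemma iso_ob: "isomorphic M X Y \<Longrightarrow> X \<in> ob M" "isomorphic M X Y \<Longrightarrow> Y \<in> ob M"
  by (auto elim!: isoE)

lemma iso_refl: "X \<in> ob M \<Longrightarrow> isomorphic M X X"
  by (rule isoI[of "idm X"]) auto

lemma iso_sym: assumes "isomorphic M X Y" shows "isomorphic M Y X"
proof -
  obtain f where "f \<in> mor M" "src M f = X" "tgt M f = Y" "isoi f" using assms by (rule isoE)
  then show ?thesis by (intro isoI[of "iv f"]) auto
qed

lemma iso_trans[trans]: "isomorphic M X Y \<Longrightarrow> isomorphic M Y Z \<Longrightarrow> isomorphic M X Z"
proof -
  assume "isomorphic M X Y" "isomorphic M Y Z"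
  then obtain f g where "f \<in> mor M" "src M f = X" "tgt M f = Y" "isoi f"
     "g \<in> mor M" "src M g = Y" "tgt M g = Z" "isoi g" by (auto elim!: isoE)
  then show ?thesis by (intro isoI[of "g \<bullet> f"]) auto
qed

lemma iso_tn: "isomorphic M X X' \<Longrightarrow> isomorphic M Y Y' \<Longrightarrow> isomorphic M (X \<odot> Y) (X' \<odot> Y')"
proof -
  assume "isomorphic M X X'" "isomorphic M Y Y'"
  then obtain f g where "f \<in> mor M" "src M f = X" "tgt M f = X'" "isoi f"
     "g \<in> mor M" "src M g = Y" "tgt M g = Y'" "isoi g" by (auto elim!: isoE)
  then show ?thesis by (intro isoI[of "f \<diamond> g"]) auto
qed

lemma iso_asc: "X \<in> ob M \<Longrightarrow> Y \<in> ob M \<Longrightarrow> Z \<in> ob M \<Longrightarrow> isomorphic M (X \<odot> Y \<odot> Z) (X \<odot> (Y \<odot> Z))"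
  by (rule isoI[of "asc X Y Z"]) auto
lemma iso_lu: "X \<in> ob M \<Longrightarrow> isomorphic M (I \<odot> X) X"
  by (rule isoI[of "lu X"]) auto
lemma iso_ru: "X \<in> ob M \<Longrightarrow> isomorphic M (X \<odot> I) X"
  by (rule isoI[of "ru X"]) auto
lemma iso_br: "X \<in> ob M \<Longrightarrow> Y \<in> ob M \<Longrightarrow> isomorphic M (X \<odot> Y) (Y \<odot> X)"
  by (rule isoI[of "br X Y"]) auto

lemma kk: "a \<bullet> b = c \<bullet> d \<Longrightarrow> a \<in> mor M \<Longrightarrow> b \<in> mor M \<Longrightarrow> c \<in> mor M \<Longrightarrow> d \<in> mor M \<Longrightarrow> k \<in> mor M \<Longrightarrow>
  tgt M b = src M a \<Longrightarrow> tgt M d = src M c \<Longrightarrow> tgt M k = src M b \<Longrightarrow> src M d = src M b \<Longrightarrow> a \<bullet> (b \<bullet> k) = c \<bullet> (d \<bullet> k)"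
proof -
  assume h: "a \<bullet> b = c \<bullet> d" "a \<in> mor M" "b \<in> mor M" "c \<in> mor M" "d \<in> mor M" "k \<in> mor M"
    "tgt M b = src M a" "tgt M d = src M c" "tgt M k = src M b" "src M d = src M b"
  have "a \<bullet> (b \<bullet> k) = (a \<bullet> b) \<bullet> k" using h(2-) by simp
  also have "\<dots> = (c \<bullet> d) \<bullet> k" using h(1) by simp
  also have "\<dots> = c \<bullet> (d \<bullet> k)" using h by simp
  finally show ?thesis .
qed

lemma merge: "f \<in> mor M \<Longrightarrow> g \<in> mor M \<Longrightarrow> f' \<in> mor M \<Longrightarrow> g' \<in> mor M \<Longrightarrow> tgt M f = src M g \<Longrightarrow> tgt M f' = src M g' \<Longrightarrow>
      (g \<diamond> g') \<bullet> (f \<diamond> f') = (g \<bullet> f) \<diamond> (g' \<bullet> f')"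
  using interchange by simp

lemma merge_k: "f \<in> mor M \<Longrightarrow> g \<in> mor M \<Longrightarrow> f' \<in> mor M \<Longrightarrow> g' \<in> mor M \<Longrightarrow> tgt M f = src M g \<Longrightarrow> tgt M f' = src M g' \<Longrightarrow>
      k \<in> mor M \<Longrightarrow> tgt M k = src M f \<odot> src M f' \<Longrightarrow>
      (g \<diamond> g') \<bullet> ((f \<diamond> f') \<bullet> k) = ((g \<bullet> f) \<diamond> (g' \<bullet> f')) \<bullet> k"
proof -
  assume h: "f \<in> mor M" "g \<in> mor M" "f' \<in> mor M" "g' \<in> mor M" "tgt M f = src M g" "tgt M f' = src M g'"
      "k \<in> mor M" "tgt M k = src M f \<odot> src M f'"
  have "(g \<diamond> g') \<bullet> ((f \<diamond> f') \<bullet> k) = ((g \<diamond> g') \<bullet> (f \<diamond> f')) \<bullet> k" using h by simp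
  also have "\<dots> = ((g \<bullet> f) \<diamond> (g' \<bullet> f')) \<bullet> k" using h by (simp add: merge)
  finally show ?thesis .
qed

lemma mono_iso: assumes "isoi f" "g \<in> mor M" "h \<in> mor M" "tgt M g = src M f" "tgt M h = src M f" "f \<bullet> g = f \<bullet> h"
  shows "g = h"
proof -
  have "g = iv f \<bullet> (f \<bullet> g)" using assms(1-5) by simp
  also have "\<dots> = iv f \<bullet> (f \<bullet> h)" using assms(6) by simp
  also have "\<dots> = h" using assms by simp
  finally show ?thesis .
qed

lemma epi_iso: assumes "isoi f" "g \<in> mor M" "h \<in> mor M" "src M g = tgt M f" "src M h = tgt M f" "g \<bullet> f = h \<bullet> f"
  shows "g = h"
proof -
  have "g = (g \<bullet> f) \<bullet> iv f" using assms(1-5) by simp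
  also have "\<dots> = (h \<bullet> f) \<bullet> iv f" using assms(6) by simp
  also have "\<dots> = h" using assms by simp
  finally show ?thesis .
qed

lemma ru_faith: assumes "u \<in> mor M" "v \<in> mor M" "src M u = src M v" "tgt M u = tgt M v" "u \<diamond> idm I = v \<diamond> idm I"
  shows "u = v"
proof (rule epi_iso[of "ru (src M u)"])
  have "u \<bullet> ru (src M u) = ru (tgt M u) \<bullet> (u \<diamond> idm I)" using ru_nat[OF assms(1)] by simp
  also have "\<dots> = ru (tgt M v) \<bullet> (v \<diamond> idm I)" using assms by simp
  also have "\<dots> = v \<bullet> ru (src M u)" using ru_nat[OF assms(2)] assms by simp
  finally show "u \<bullet> ru (src M u) = v \<bullet> ru (src M u)" .
qed (use assms in auto)

lemma kelly: assumes Y: "Y \<in> ob M" and A: "A \<in> ob M"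
  shows "(idm Y \<diamond> ru A) \<bullet> asc Y A I = ru (Y \<odot> A)"
proof (rule ru_faith)
  have e1: "(idm Y \<diamond> (idm A \<diamond> lu I)) \<bullet> asc Y A (I \<odot> I) = asc Y A I \<bullet> (idm (Y \<odot> A) \<diamond> lu I)"
    using asc_nat[of "idm Y" "idm A" "lu I"] Y A by simp
  have e2: "(idm (Y \<odot> A) \<diamond> lu I) \<bullet> asc (Y \<odot> A) I I = ru (Y \<odot> A) \<diamond> idm I" using triangle[of "Y \<odot> A" I] Y A by simp
  have e3: "(idm A \<diamond> lu I) \<bullet> asc A I I = ru A \<diamond> idm I" using triangle[of A I] A by simp
  have e4: "asc Y A I \<bullet> ((idm Y \<diamond> ru A) \<diamond> idm I) = (idm Y \<diamond> (ru A \<diamond> idm I)) \<bullet> asc Y (A \<odot> I) I"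
    using asc_nat[of "idm Y" "ru A" "idm I"] Y A by simp
  have P: "asc Y A (I \<odot> I) \<bullet> asc (Y \<odot> A) I I = (idm Y \<diamond> asc A I I) \<bullet> (asc Y (A \<odot> I) I \<bullet> (asc Y A I \<diamond> idm I))"
    using pentagon[of Y A I I] Y A by simp
  have "asc Y A I \<bullet> (ru (Y \<odot> A) \<diamond> idm I) = asc Y A I \<bullet> ((idm (Y \<odot> A) \<diamond> lu I) \<bullet> asc (Y \<odot> A) I I)"
    using e2 by simp
  also have "\<dots> = (idm Y \<diamond> (idm A \<diamond> lu I)) \<bullet> (asc Y A (I \<odot> I) \<bullet> asc (Y \<odot> A) I I)"
    using Y A by (simp add: kk[OF e1])
  also have "\<dots> = (idm Y \<diamond> (idm A \<diamond> lu I)) \<bullet> ((idm Y \<diamond> asc A I I) \<bullet> (asc Y (A \<odot> I) I \<bullet> (asc Y A I \<diamond> idm I)))"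
    using P by simp
  also have "\<dots> = (idm Y \<diamond> ((idm A \<diamond> lu I) \<bullet> asc A I I)) \<bullet> (asc Y (A \<odot> I) I \<bullet> (asc Y A I \<diamond> idm I))"
    using Y A by (simp add: merge_k)
  also have "\<dots> = (idm Y \<diamond> (ru A \<diamond> idm I)) \<bullet> (asc Y (A \<odot> I) I \<bullet> (asc Y A I \<diamond> idm I))"
    using e3 by simp
  also have "\<dots> = asc Y A I \<bullet> (((idm Y \<diamond> ru A) \<diamond> idm I) \<bullet> (asc Y A I \<diamond> idm I))"
    using Y A by (simp add: kk[OF e4, symmetric])
  also have "\<dots> = asc Y A I \<bullet> (((idm Y \<diamond> ru A) \<bullet> asc Y A I) \<diamond> idm I)"
    using Y A by (simp add: merge)
  finally have fin: "asc Y A I \<bullet> (ru (Y \<odot> A) \<diamond> idm I) = asc Y A I \<bullet> (((idm Y \<diamond> ru A) \<bullet> asc Y A I) \<diamond> idm I)" .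
  have "ru (Y \<odot> A) \<diamond> idm I = ((idm Y \<diamond> ru A) \<bullet> asc Y A I) \<diamond> idm I"
    by (rule mono_iso[OF _ _ _ _ _ fin]) (use Y A in simp_all)
  then show "((idm Y \<diamond> ru A) \<bullet> asc Y A I) \<diamond> idm I = ru (Y \<odot> A) \<diamond> idm I" by (rule sym)
qed (use Y A in auto)

abbreviation wi where "wi A \<equiv> weakly_invertible M A"

lemma wi_iff: "wi A \<longleftrightarrow> A \<in> ob M \<and> (\<exists>B \<in> ob M. isomorphic M (A \<odot> B) I \<and> isomorphic M (B \<odot> A) I)"
  unfolding weakly_invertible_def by simp

lemma wi_ob: "wi A \<Longrightarrow> A \<in> ob M" unfolding wi_iff by simp

lemma wi_unit: "wi I"
  unfolding wi_iff using iso_lu[of I] by auto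

lemma wi_invE: assumes "wi A" obtains B where "wi B" "isomorphic M (A \<odot> B) I" "isomorphic M (B \<odot> A) I"
  using assms unfolding wi_iff by blast

lemma wi_iso: assumes "wi A" "isomorphic M A A'" shows "wi A'"
proof -
  obtain B where B: "B \<in> ob M" "isomorphic M (A \<odot> B) I" "isomorphic M (B \<odot> A) I" using assms(1) unfolding wi_iff by blast
  have "isomorphic M (A' \<odot> B) I" using iso_trans[OF iso_tn[OF iso_sym[OF assms(2)] iso_refl[OF B(1)]] B(2)] .
  moreover have "isomorphic M (B \<odot> A') I" using iso_trans[OF iso_tn[OF iso_refl[OF B(1)] iso_sym[OF assms(2)]] B(3)] .
  ultimately show ?thesis using B(1) iso_ob(2)[OF assms(2)] unfolding wi_iff by blast
qed

lemma wi_tn: assumes "wi A" "wi B" shows "wi (A \<odot> B)"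
proof -
  obtain A' where A': "A' \<in> ob M" "isomorphic M (A \<odot> A') I" "isomorphic M (A' \<odot> A) I" using assms(1) unfolding wi_iff by blast
  obtain B' where B': "B' \<in> ob M" "isomorphic M (B \<odot> B') I" "isomorphic M (B' \<odot> B) I" using assms(2) unfolding wi_iff by blast
  have ob: "A \<in> ob M" "B \<in> ob M" using assms wi_ob by auto
  have "isomorphic M (A \<odot> B \<odot> (B' \<odot> A')) (A \<odot> (B \<odot> (B' \<odot> A')))" using ob A' B' by (simp add: iso_asc)
  also have "isomorphic M \<dots> (A \<odot> ((B \<odot> B') \<odot> A'))" by (rule iso_tn[OF iso_refl iso_sym[OF iso_asc]]) (use ob A' B' in auto)
  also have "isomorphic M \<dots> (A \<odot> (I \<odot> A'))" by (rule iso_tn[OF iso_refl iso_tn[OF B'(2) iso_refl]]) (use ob A' B' in auto)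
  also have "isomorphic M \<dots> (A \<odot> A')" by (rule iso_tn[OF iso_refl iso_lu]) (use ob A' B' in auto)
  also have "isomorphic M \<dots> I" by (rule A')
  finally have 1: "isomorphic M (A \<odot> B \<odot> (B' \<odot> A')) I" .
  have "isomorphic M (B' \<odot> A' \<odot> (A \<odot> B)) (B' \<odot> (A' \<odot> (A \<odot> B)))" using ob A' B' by (simp add: iso_asc)
  also have "isomorphic M \<dots> (B' \<odot> ((A' \<odot> A) \<odot> B))" by (rule iso_tn[OF iso_refl iso_sym[OF iso_asc]]) (use ob A' B' in auto)
  also have "isomorphic M \<dots> (B' \<odot> (I \<odot> B))" by (rule iso_tn[OF iso_refl iso_tn[OF A'(3) iso_refl]]) (use ob A' B' in auto)
  also have "isomorphic M \<dots> (B' \<odot> B)" by (rule iso_tn[OF iso_refl iso_lu]) (use ob A' B' in auto)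
  also have "isomorphic M \<dots> I" by (rule B')
  finally have 2: "isomorphic M (B' \<odot> A' \<odot> (A \<odot> B)) I" .
  show ?thesis unfolding wi_iff using 1 2 ob A' B' by auto
qed


lemma sq_inv: assumes "isoi a" "isoi b" "x \<in> mor M" "y \<in> mor M" "src M a = tgt M x" "tgt M b = src M y"
   "src M x = src M b" "tgt M y = tgt M a" "a \<bullet> x = y \<bullet> b"
  shows "iv a \<bullet> y = x \<bullet> iv b"
proof -
  have k: "y \<bullet> (b \<bullet> iv b) = a \<bullet> (x \<bullet> iv b)" by (rule kk[OF assms(9)[symmetric]]) (use assms(1-8) in simp_all)
  have "iv a \<bullet> y = iv a \<bullet> (y \<bullet> (b \<bullet> iv b))" using assms(1-8) by simp
  also have "\<dots> = iv a \<bullet> (a \<bullet> (x \<bullet> iv b))" by (simp only: k)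
  also have "\<dots> = x \<bullet> iv b" using assms(1-8) by simp
  finally show ?thesis .
qed

lemma nat_cancel2: assumes "isoi tV" "x \<in> mor M" "tgt M x = src M tV" "tV \<bullet> x = y"
  shows "x = iv tV \<bullet> y"
proof -
  have "x = iv tV \<bullet> (tV \<bullet> x)" using assms(1-3) by simp
  then show ?thesis using assms(4) by simp
qed

lemma wi_data: assumes "wi A"
  obtains B e e' where "wi B" "e \<in> mor M" "src M e = A \<odot> B" "tgt M e = I" "isoi e"
    "e' \<in> mor M" "src M e' = B \<odot> A" "tgt M e' = I" "isoi e'"
proof -
  obtain B where B: "wi B" "isomorphic M (A \<odot> B) I" "isomorphic M (B \<odot> A) I" using assms by (rule wi_invE)
  obtain e where "e \<in> mor M" "src M e = A \<odot> B" "tgt M e = I" "isoi e" using B(2) by (rule isoE)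
  moreover obtain e' where "e' \<in> mor M" "src M e' = B \<odot> A" "tgt M e' = I" "isoi e'" using B(3) by (rule isoE)
  ultimately show ?thesis using that B(1) by blast
qed

definition th where "th B A e U = lu U \<bullet> ((e \<diamond> idm U) \<bullet> iv (asc B A U))"

lemma th_mor: assumes "B \<in> ob M" "A \<in> ob M" "U \<in> ob M" "isoi e" "src M e = B \<odot> A" "tgt M e = I"
  shows "th B A e U \<in> mor M" "src M (th B A e U) = B \<odot> (A \<odot> U)" "tgt M (th B A e U) = U" "isoi (th B A e U)"
  unfolding th_def using assms by auto

lemma th_nat: assumes o: "B \<in> ob M" "A \<in> ob M" "U \<in> ob M" "V \<in> ob M" and e: "isoi e" "src M e = B \<odot> A" "tgt M e = I"
  and h: "h \<in> mor M" "src M h = U" "tgt M h = V"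
  shows "th B A e V \<bullet> (idm B \<diamond> (idm A \<diamond> h)) = h \<bullet> th B A e U"
proof -
  have n1: "asc B A V \<bullet> (idm (B \<odot> A) \<diamond> h) = (idm B \<diamond> (idm A \<diamond> h)) \<bullet> asc B A U"
    using asc_nat[of "idm B" "idm A" h] o h by simp
  have n1': "iv (asc B A V) \<bullet> (idm B \<diamond> (idm A \<diamond> h)) = (idm (B \<odot> A) \<diamond> h) \<bullet> iv (asc B A U)"
    by (rule sq_inv[OF _ _ _ _ _ _ _ _ n1]) (use o h in simp_all)
  have n2: "(e \<diamond> idm V) \<bullet> (idm (B \<odot> A) \<diamond> h) = (idm I \<diamond> h) \<bullet> (e \<diamond> idm U)"
    using o e h by (simp add: merge)
  have n3: "lu V \<bullet> (idm I \<diamond> h) = h \<bullet> lu U" using lu_nat[OF h(1)] h by simp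
  have "th B A e V \<bullet> (idm B \<diamond> (idm A \<diamond> h)) = lu V \<bullet> ((e \<diamond> idm V) \<bullet> (iv (asc B A V) \<bullet> (idm B \<diamond> (idm A \<diamond> h))))"
    unfolding th_def using o e h by simp
  also have "\<dots> = lu V \<bullet> ((e \<diamond> idm V) \<bullet> ((idm (B \<odot> A) \<diamond> h) \<bullet> iv (asc B A U)))" using n1' by simp
  also have "\<dots> = lu V \<bullet> ((idm I \<diamond> h) \<bullet> ((e \<diamond> idm U) \<bullet> iv (asc B A U)))"
    using o e h by (simp add: kk[OF n2])
  also have "\<dots> = h \<bullet> (lu U \<bullet> ((e \<diamond> idm U) \<bullet> iv (asc B A U)))"
    using o e h by (simp add: kk[OF n3])
  finally show ?thesis unfolding th_def .
qed

lemma nat_cancel: assumes "isoi tU" "isoi tV" "x \<in> mor M" "h \<in> mor M" "src M x = src M tU" "tgt M x = src M tV"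
  "src M h = tgt M tU" "tgt M h = tgt M tV" "tV \<bullet> x = h \<bullet> tU"
  shows "h = tV \<bullet> (x \<bullet> iv tU)"
proof -
  have k: "h \<bullet> (tU \<bullet> iv tU) = tV \<bullet> (x \<bullet> iv tU)" by (rule kk[OF assms(9)[symmetric]]) (use assms(1-8) in simp_all)
  have "h = h \<bullet> (tU \<bullet> iv tU)" using assms(1-8) by simp
  also have "\<dots> = tV \<bullet> (x \<bullet> iv tU)" by (rule k)
  finally show ?thesis .
qed

lemma faith_gen: assumes o: "B \<in> ob M" "A \<in> ob M" and e: "isoi e" "src M e = B \<odot> A" "tgt M e = I"
  and h: "h1 \<in> mor M" "h2 \<in> mor M" "src M h1 = src M h2" "tgt M h1 = tgt M h2" and eq: "idm A \<diamond> h1 = idm A \<diamond> h2"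
  shows "h1 = h2"
proof -
  define U where "U = src M h1"
  define V where "V = tgt M h1"
  have hh: "src M h1 = U" "tgt M h1 = V" "src M h2 = U" "tgt M h2 = V" using h unfolding U_def V_def by auto
  have oo: "U \<in> ob M" "V \<in> ob M" using h unfolding U_def V_def by auto
  note T = th_mor[OF o oo(1) e] th_mor[OF o oo(2) e]
  have n1: "th B A e V \<bullet> (idm B \<diamond> (idm A \<diamond> h1)) = h1 \<bullet> th B A e U" by (rule th_nat[OF o oo e h(1) hh(1,2)])
  have n2: "th B A e V \<bullet> (idm B \<diamond> (idm A \<diamond> h2)) = h2 \<bullet> th B A e U" by (rule th_nat[OF o oo e h(2) hh(3,4)])
  have c1: "h1 = th B A e V \<bullet> ((idm B \<diamond> (idm A \<diamond> h1)) \<bullet> iv (th B A e U))"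
    by (rule nat_cancel[OF T(4) T(8) _ h(1) _ _ _ _ n1]) (use T o oo h hh in simp_all)
  have c2: "h2 = th B A e V \<bullet> ((idm B \<diamond> (idm A \<diamond> h2)) \<bullet> iv (th B A e U))"
    by (rule nat_cancel[OF T(4) T(8) _ h(2) _ _ _ _ n2]) (use T o oo h hh in simp_all)
  have "h1 = th B A e V \<bullet> ((idm B \<diamond> (idm A \<diamond> h1)) \<bullet> iv (th B A e U))" by (rule c1)
  also have "\<dots> = th B A e V \<bullet> ((idm B \<diamond> (idm A \<diamond> h2)) \<bullet> iv (th B A e U))" by (simp only: eq)
  also have "\<dots> = h2" by (rule c2[symmetric])
  finally show ?thesis .
qed

lemma wi_faith: assumes "wi A" "h1 \<in> mor M" "h2 \<in> mor M" "src M h1 = src M h2" "tgt M h1 = tgt M h2" "idm A \<diamond> h1 = idm A \<diamond> h2"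
  shows "h1 = h2"
proof -
  obtain B e e' where "wi B" "e \<in> mor M" "src M e = A \<odot> B" "tgt M e = I" "isoi e"
    "e' \<in> mor M" "src M e' = B \<odot> A" "tgt M e' = I" "isoi e'" using assms(1) by (rule wi_data)
  then show ?thesis using faith_gen[of B A e' h1 h2] assms wi_ob by blast
qed

lemma wi_full: assumes A: "wi A" and o: "U \<in> ob M" "V \<in> ob M" and h: "h \<in> mor M" "src M h = A \<odot> U" "tgt M h = A \<odot> V"
  shows "\<exists>h'. h' \<in> mor M \<and> src M h' = U \<and> tgt M h' = V \<and> idm A \<diamond> h' = h"
proof -
  obtain B e e' where B: "wi B" "e \<in> mor M" "src M e = A \<odot> B" "tgt M e = I" "isoi e"
    "e' \<in> mor M" "src M e' = B \<odot> A" "tgt M e' = I" "isoi e'" using assms(1) by (rule wi_data)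
  have oA: "A \<in> ob M" "B \<in> ob M" using A B(1) wi_ob by auto
  note T = th_mor[OF oA(2) oA(1) _ B(9,7,8)]
  define h' where "h' = th B A e' V \<bullet> ((idm B \<diamond> h) \<bullet> iv (th B A e' U))"
  have h'm: "h' \<in> mor M" "src M h' = U" "tgt M h' = V" unfolding h'_def using T o oA h by simp_all
  have n: "th B A e' V \<bullet> (idm B \<diamond> (idm A \<diamond> h')) = h' \<bullet> th B A e' U"
    by (rule th_nat[OF oA(2) oA(1) o B(9,7,8) h'm])
  have "idm B \<diamond> (idm A \<diamond> h') = iv (th B A e' V) \<bullet> (h' \<bullet> th B A e' U)"
    by (rule nat_cancel2[OF _ _ _ n]) (use T o oA h'm in simp_all)
  also have "\<dots> = idm B \<diamond> h" unfolding h'_def using T o oA h by simp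
  finally have "idm B \<diamond> (idm A \<diamond> h') = idm B \<diamond> h" .
  then have "idm A \<diamond> h' = h" by (rule faith_gen[OF oA(1) oA(2) B(5,3,4), rotated 4]) (use h h'm oA o in simp_all)
  then show ?thesis using h'm by blast
qed

lemma wi_refl_iso: assumes A: "wi A" and p: "p \<in> mor M" "isoi (idm A \<diamond> p)"
  shows "isoi p"
proof -
  have o: "src M p \<in> ob M" "tgt M p \<in> ob M" "A \<in> ob M" using p A wi_ob by auto
  obtain q where q: "q \<in> mor M" "src M q = tgt M p" "tgt M q = src M p" "idm A \<diamond> q = iv (idm A \<diamond> p)"
    using wi_full[OF A o(2) o(1), of "iv (idm A \<diamond> p)"] p o by auto
  have 1: "q \<bullet> p = idm (src M p)"
  proof (rule wi_faith[OF A])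
    have "idm A \<diamond> (q \<bullet> p) = (idm A \<diamond> q) \<bullet> (idm A \<diamond> p)" using q(1-3) p o by (simp add: merge)
    also have "\<dots> = iv (idm A \<diamond> p) \<bullet> (idm A \<diamond> p)" using q(4) by simp
    also have "\<dots> = idm A \<diamond> idm (src M p)" using p o by simp
    finally show "idm A \<diamond> (q \<bullet> p) = idm A \<diamond> idm (src M p)" .
  qed (use q(1-3) p(1) o in simp_all)
  have 2: "p \<bullet> q = idm (tgt M p)"
  proof (rule wi_faith[OF A])
    have "idm A \<diamond> (p \<bullet> q) = (idm A \<diamond> p) \<bullet> (idm A \<diamond> q)" using q(1-3) p o by (simp add: merge)
    also have "\<dots> = (idm A \<diamond> p) \<bullet> iv (idm A \<diamond> p)" using q(4) by simp
    also have "\<dots> = idm A \<diamond> idm (tgt M p)" using p o by simp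
    finally show "idm A \<diamond> (p \<bullet> q) = idm A \<diamond> idm (tgt M p)" .
  qed (use q(1-3) p(1) o in simp_all)
  show ?thesis by (rule iso_intro[OF p(1) q(1) q(2) q(3) 1 2])
qed

end

section \<open>Generic facts on K\<close>

definition eqv_good :: "('o,'m,'z) smcat_scheme \<Rightarrow> bool" where
 "eqv_good C \<longleftrightarrow> (\<forall>X Y. isomorphic C X Y \<longrightarrow> X \<in> ob C \<and> Y \<in> ob C) \<and> (\<forall>X\<in>ob C. isomorphic C X X) \<and>
   (\<forall>X Y. isomorphic C X Y \<longrightarrow> isomorphic C Y X) \<and>
   (\<forall>X Y Z. isomorphic C X Y \<longrightarrow> isomorphic C Y Z \<longrightarrow> isomorphic C X Z) \<and>
   (\<forall>X\<in>ob C. \<forall>Y\<in>ob C. otens C X Y \<in> ob C) \<and>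
   (\<forall>X X' Y Y'. isomorphic C X X' \<longrightarrow> isomorphic C Y Y' \<longrightarrow> isomorphic C (otens C X Y) (otens C X' Y'))"

context
  fixes C :: "('o,'m,'z) smcat_scheme"
  assumes g: "eqv_good C"
begin

lemma g_ob: "isomorphic C X Y \<Longrightarrow> X \<in> ob C" "isomorphic C X Y \<Longrightarrow> Y \<in> ob C"
  using g unfolding eqv_good_def by blast+
lemma g_refl: "X \<in> ob C \<Longrightarrow> isomorphic C X X" using g unfolding eqv_good_def by blast
lemma g_sym: "isomorphic C X Y \<Longrightarrow> isomorphic C Y X" using g unfolding eqv_good_def by blast
lemma g_trans: "isomorphic C X Y \<Longrightarrow> isomorphic C Y Z \<Longrightarrow> isomorphic C X Z" using g unfolding eqv_good_def by blast
lemma g_otob: "X \<in> ob C \<Longrightarrow> Y \<in> ob C \<Longrightarrow> otens C X Y \<in> ob C" using g unfolding eqv_good_def by blast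
lemma g_tn: "isomorphic C X X' \<Longrightarrow> isomorphic C Y Y' \<Longrightarrow> isomorphic C (otens C X Y) (otens C X' Y')"
  using g unfolding eqv_good_def by blast

lemma ic_eqI: assumes a: "isomorphic C X Y" shows "iso_class C X = iso_class C Y"
proof -
  have "\<forall>Z. isomorphic C X Z \<longleftrightarrow> isomorphic C Y Z" using g_trans[OF g_sym[OF a]] g_trans[OF a] by blast
  then show ?thesis unfolding iso_class_def by auto
qed

lemma ic_eq_iff: assumes "X \<in> ob C" shows "iso_class C X = iso_class C Y \<longleftrightarrow> isomorphic C X Y"
proof
  assume "iso_class C X = iso_class C Y"
  moreover have "X \<in> iso_class C X" using assms g_refl unfolding iso_class_def by blast
  ultimately have "isomorphic C Y X" unfolding iso_class_def by blast
  then show "isomorphic C X Y" by (rule g_sym)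
qed (rule ic_eqI)

lemma ic_some: assumes "X \<in> ob C"
  shows "(SOME x. x \<in> iso_class C X) \<in> ob C" "isomorphic C X (SOME x. x \<in> iso_class C X)"
proof -
  have "X \<in> iso_class C X" using assms g_refl unfolding iso_class_def by blast
  then have "(SOME x. x \<in> iso_class C X) \<in> iso_class C X" by (rule someI)
  then show "(SOME x. x \<in> iso_class C X) \<in> ob C" "isomorphic C X (SOME x. x \<in> iso_class C X)"
    unfolding iso_class_def by auto
qed

lemma Kmon_carrier: "carrier (Kmon C) = iso_class C ` ob C" unfolding Kmon_def by simp

lemma Kmon_mult: assumes "X \<in> ob C" "Y \<in> ob C"
  shows "mult (Kmon C) (iso_class C X) (iso_class C Y) = iso_class C (otens C X Y)"
proof -
  have "mult (Kmon C) (iso_class C X) (iso_class C Y) =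
      iso_class C (otens C (SOME x. x \<in> iso_class C X) (SOME x. x \<in> iso_class C Y))"
    unfolding Kmon_def by simp
  also have "\<dots> = iso_class C (otens C X Y)"
    by (rule ic_eqI, rule g_sym, rule g_tn) (use ic_some assms in auto)
  finally show ?thesis .
qed

lemma Kmon_one: "one (Kmon C) = iso_class C (unitob C)" unfolding Kmon_def by simp

end

lemma Kmap_ic:
  assumes "eqv_good C" "eqv_good D" "\<And>X Y. isomorphic C X Y \<Longrightarrow> isomorphic D (Fo X) (Fo Y)" "X \<in> ob C"
  shows "Kmap C D Fo (iso_class C X) = iso_class D (Fo X)"
  unfolding Kmap_def
  by (rule ic_eqI[OF assms(2)], rule assms(3), rule g_sym[OF assms(1)]) (use ic_some[OF assms(1)] assms in auto)

lemma Kmap_iso: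
  assumes gC: "eqv_good C" and gD: "eqv_good D"
    and resp: "\<And>X Y. isomorphic C X Y \<Longrightarrow> isomorphic D (Fo X) (Fo Y)"
    and refl: "\<And>X Y. X \<in> ob C \<Longrightarrow> Y \<in> ob C \<Longrightarrow> isomorphic D (Fo X) (Fo Y) \<Longrightarrow> isomorphic C X Y"
    and obS: "\<And>X. X \<in> ob C \<Longrightarrow> Fo X \<in> S" and S: "S \<subseteq> ob D"
    and ess: "\<And>Y. Y \<in> S \<Longrightarrow> \<exists>X \<in> ob C. isomorphic D (Fo X) Y"
    and tn: "\<And>X Y. X \<in> ob C \<Longrightarrow> Y \<in> ob C \<Longrightarrow> isomorphic D (Fo (otens C X Y)) (otens D (Fo X) (Fo Y))"
    and H: "carrier H = iso_class D ` S" "mult H = mult (Kmon D)"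
  shows "Kmap C D Fo \<in> iso (Kmon C) H"
proof -
  have K: "\<And>X. X \<in> ob C \<Longrightarrow> Kmap C D Fo (iso_class C X) = iso_class D (Fo X)"
    using Kmap_ic[where Fo=Fo, OF gC gD resp] by blast
  have obD: "\<And>X. X \<in> ob C \<Longrightarrow> Fo X \<in> ob D" using obS S by blast
  have hom: "Kmap C D Fo \<in> hom (Kmon C) H"
  proof (rule homI)
    fix x assume "x \<in> carrier (Kmon C)"
    then obtain X where "X \<in> ob C" "x = iso_class C X" unfolding Kmon_carrier[OF gC] by blast
    then show "Kmap C D Fo x \<in> carrier H" using K obS H by auto
  next
    fix x y assume "x \<in> carrier (Kmon C)" "y \<in> carrier (Kmon C)"
    then obtain X Y where XY: "X \<in> ob C" "x = iso_class C X" "Y \<in> ob C" "y = iso_class C Y"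
      unfolding Kmon_carrier[OF gC] by blast
    have "Kmap C D Fo (x \<otimes>\<^bsub>Kmon C\<^esub> y) = iso_class D (Fo (otens C X Y))"
      using XY by (simp add: Kmon_mult[OF gC] K g_otob[OF gC])
    also have "\<dots> = iso_class D (otens D (Fo X) (Fo Y))" using tn XY by (intro ic_eqI[OF gD]) auto
    also have "\<dots> = Kmap C D Fo x \<otimes>\<^bsub>H\<^esub> Kmap C D Fo y"
      using XY H by (simp add: K Kmon_mult[OF gD] obD)
    finally show "Kmap C D Fo (x \<otimes>\<^bsub>Kmon C\<^esub> y) = Kmap C D Fo x \<otimes>\<^bsub>H\<^esub> Kmap C D Fo y" .
  qed
  have bij: "bij_betw (Kmap C D Fo) (carrier (Kmon C)) (carrier H)"
  proof (rule bij_betw_imageI)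
    show "inj_on (Kmap C D Fo) (carrier (Kmon C))"
    proof (rule inj_onI)
      fix x y assume "x \<in> carrier (Kmon C)" "y \<in> carrier (Kmon C)" "Kmap C D Fo x = Kmap C D Fo y"
      then obtain X Y where XY: "X \<in> ob C" "x = iso_class C X" "Y \<in> ob C" "y = iso_class C Y"
        "iso_class D (Fo X) = iso_class D (Fo Y)"
        unfolding Kmon_carrier[OF gC] using K by auto
      then have "isomorphic D (Fo X) (Fo Y)" using ic_eq_iff[OF gD] obD by blast
      then show "x = y" using XY refl ic_eqI[OF gC] by blast
    qed
    show "Kmap C D Fo ` carrier (Kmon C) = carrier H"
    proof
      show "Kmap C D Fo ` carrier (Kmon C) \<subseteq> carrier H"
        unfolding Kmon_carrier[OF gC] H using K obS by auto
      show "carrier H \<subseteq> Kmap C D Fo ` carrier (Kmon C)"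
      proof
        fix y assume "y \<in> carrier H"
        then obtain Y where Y: "Y \<in> S" "y = iso_class D Y" using H by auto
        then obtain X where X: "X \<in> ob C" "isomorphic D (Fo X) Y" using ess by blast
        then have "y = Kmap C D Fo (iso_class C X)" using Y K ic_eqI[OF gD] by auto
        then show "y \<in> Kmap C D Fo ` carrier (Kmon C)" using X unfolding Kmon_carrier[OF gC] by blast
      qed
    qed
  qed
  show ?thesis using hom bij unfolding iso_def by blast
qed



context smc begin

lemma kk1: "a \<bullet> b = c \<Longrightarrow> a \<in> mor M \<Longrightarrow> b \<in> mor M \<Longrightarrow> k \<in> mor M \<Longrightarrow>
  tgt M b = src M a \<Longrightarrow> tgt M k = src M b \<Longrightarrow> a \<bullet> (b \<bullet> k) = c \<bullet> k"
proof -
  assume h: "a \<bullet> b = c" "a \<in> mor M" "b \<in> mor M" "k \<in> mor M" "tgt M b = src M a" "tgt M k = src M b"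
  have "a \<bullet> (b \<bullet> k) = (a \<bullet> b) \<bullet> k" using h(2-) by simp
  then show ?thesis using h(1) by simp
qed

lemma asc_inv_pent: assumes o: "Y \<in> ob M" "A \<in> ob M" "B \<in> ob M"
  shows "asc (Y \<odot> A) B A \<bullet> (iv (asc Y A B) \<diamond> idm A) = iv (asc Y A (B \<odot> A)) \<bullet> ((idm Y \<diamond> asc A B A) \<bullet> asc Y (A \<odot> B) A)"
proof -
  have P: "asc Y A (B \<odot> A) \<bullet> asc (Y \<odot> A) B A = (idm Y \<diamond> asc A B A) \<bullet> (asc Y (A \<odot> B) A \<bullet> (asc Y A B \<diamond> idm A))"
    using pentagon[of Y A B A] o by simp
  have k: "asc Y A (B \<odot> A) \<bullet> (asc (Y \<odot> A) B A \<bullet> (iv (asc Y A B) \<diamond> idm A)) =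
      (idm Y \<diamond> asc A B A) \<bullet> ((asc Y (A \<odot> B) A \<bullet> (asc Y A B \<diamond> idm A)) \<bullet> (iv (asc Y A B) \<diamond> idm A))"
    by (rule kk[OF P]) (use o in simp_all)
  have "asc (Y \<odot> A) B A \<bullet> (iv (asc Y A B) \<diamond> idm A) = iv (asc Y A (B \<odot> A)) \<bullet> (asc Y A (B \<odot> A) \<bullet> (asc (Y \<odot> A) B A \<bullet> (iv (asc Y A B) \<diamond> idm A)))"
    using o by simp
  also have "\<dots> = iv (asc Y A (B \<odot> A)) \<bullet> ((idm Y \<diamond> asc A B A) \<bullet> ((asc Y (A \<odot> B) A \<bullet> (asc Y A B \<diamond> idm A)) \<bullet> (iv (asc Y A B) \<diamond> idm A)))"
    by (simp only: k)
  also have "\<dots> = iv (asc Y A (B \<odot> A)) \<bullet> ((idm Y \<diamond> asc A B A) \<bullet> asc Y (A \<odot> B) A)"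
    using o by (simp add: merge)
  finally show ?thesis .
qed

lemma tri_inv: assumes o: "Y \<in> ob M" "A \<in> ob M"
  shows "asc Y I A \<bullet> (iv (ru Y) \<diamond> idm A) = idm Y \<diamond> iv (lu A)"
proof -
  have T: "(idm Y \<diamond> lu A) \<bullet> asc Y I A = ru Y \<diamond> idm A" using triangle o by simp
  have a: "asc Y I A = iv (idm Y \<diamond> lu A) \<bullet> (ru Y \<diamond> idm A)" by (rule nat_cancel2[OF _ _ _ T]) (use o in simp_all)
  show ?thesis unfolding a using o by (simp add: merge)
qed

lemma P_inv_data:
  assumes o: "X \<in> ob M" "Y \<in> ob M" and A: "wi A" and f: "f \<in> mor M" "src M f = X" "tgt M f = Y \<odot> A" "isoi f"
  shows "\<exists>B g \<alpha> \<alpha>'. wi B \<and> g \<in> mor M \<and> src M g = Y \<and> tgt M g = X \<odot> B \<and>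
     \<alpha> \<in> mor M \<and> src M \<alpha> = B \<odot> A \<and> tgt M \<alpha> = I \<and> isoi \<alpha> \<and> (idm X \<diamond> \<alpha>) \<bullet> (asc X B A \<bullet> ((g \<diamond> idm A) \<bullet> f)) = iv (ru X) \<and>
     \<alpha>' \<in> mor M \<and> src M \<alpha>' = A \<odot> B \<and> tgt M \<alpha>' = I \<and> isoi \<alpha>' \<and> (idm Y \<diamond> \<alpha>') \<bullet> (asc Y A B \<bullet> ((f \<diamond> idm B) \<bullet> g)) = iv (ru Y)"
proof -
  obtain B e e' where B: "wi B" "e \<in> mor M" "src M e = A \<odot> B" "tgt M e = I" "isoi e"
    "e' \<in> mor M" "src M e' = B \<odot> A" "tgt M e' = I" "isoi e'" using A by (rule wi_data)
  have oA: "A \<in> ob M" "B \<in> ob M" using A B(1) wi_ob by auto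
  note facts = o oA f B(2-5)
  define g where "g = (iv f \<diamond> idm B) \<bullet> (iv (asc Y A B) \<bullet> ((idm Y \<diamond> iv e) \<bullet> iv (ru Y)))"
  have gm: "g \<in> mor M" "src M g = Y" "tgt M g = X \<odot> B" unfolding g_def using facts by simp_all
  have E2: "(idm Y \<diamond> e) \<bullet> (asc Y A B \<bullet> ((f \<diamond> idm B) \<bullet> g)) = iv (ru Y)"
    unfolding g_def using facts by (simp add: merge_k merge)
  define \<phi> where "\<phi> = asc A B A \<bullet> ((iv e \<diamond> idm A) \<bullet> iv (lu A))"
  have \<phi>m: "\<phi> \<in> mor M" "src M \<phi> = A" "tgt M \<phi> = A \<odot> (B \<odot> A)" "isoi \<phi>" unfolding \<phi>_def using facts by simp_all
  obtain \<psi> where \<psi>: "\<psi> \<in> mor M" "src M \<psi> = I" "tgt M \<psi> = B \<odot> A" "idm A \<diamond> \<psi> = \<phi> \<bullet> ru A"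
    using wi_full[OF A unit_ob, of "B \<odot> A" "\<phi> \<bullet> ru A"] \<phi>m oA by auto
  have \<psi>i: "isoi \<psi>" by (rule wi_refl_iso[OF A \<psi>(1)]) (use \<psi> \<phi>m oA in simp)
  define \<alpha> where "\<alpha> = iv \<psi>"
  have \<alpha>m: "\<alpha> \<in> mor M" "src M \<alpha> = B \<odot> A" "tgt M \<alpha> = I" "isoi \<alpha>" unfolding \<alpha>_def using \<psi> \<psi>i by simp_all
  have s8: "(idm A \<diamond> \<alpha>) \<bullet> \<phi> = iv (ru A)"
  proof -
    have "\<phi> = (idm A \<diamond> \<psi>) \<bullet> iv (ru A)" using \<psi>(4) \<phi>m oA by simp
    then have "(idm A \<diamond> \<alpha>) \<bullet> \<phi> = (idm A \<diamond> \<alpha>) \<bullet> ((idm A \<diamond> \<psi>) \<bullet> iv (ru A))" by simp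
    also have "\<dots> = iv (ru A)" unfolding \<alpha>_def using \<psi>(1-3) \<psi>i oA by (simp add: merge_k)
    finally show ?thesis .
  qed
  have s1: "g \<diamond> idm A = ((iv f \<diamond> idm B) \<diamond> idm A) \<bullet> ((iv (asc Y A B) \<diamond> idm A) \<bullet> (((idm Y \<diamond> iv e) \<diamond> idm A) \<bullet> (iv (ru Y) \<diamond> idm A)))"
    unfolding g_def using facts by (simp add: merge_k merge)
  have s2: "asc X B A \<bullet> ((iv f \<diamond> idm B) \<diamond> idm A) = (iv f \<diamond> idm (B \<odot> A)) \<bullet> asc (Y \<odot> A) B A"
    using asc_nat[of "iv f" "idm B" "idm A"] facts by simp
  have s3: "(idm X \<diamond> \<alpha>) \<bullet> (iv f \<diamond> idm (B \<odot> A)) = (iv f \<diamond> idm I) \<bullet> (idm (Y \<odot> A) \<diamond> \<alpha>)"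
    using facts \<alpha>m by (simp add: merge)
  have s4: "asc (Y \<odot> A) B A \<bullet> (iv (asc Y A B) \<diamond> idm A) = iv (asc Y A (B \<odot> A)) \<bullet> ((idm Y \<diamond> asc A B A) \<bullet> asc Y (A \<odot> B) A)"
    using asc_inv_pent facts by simp
  have s5: "asc Y (A \<odot> B) A \<bullet> ((idm Y \<diamond> iv e) \<diamond> idm A) = (idm Y \<diamond> (iv e \<diamond> idm A)) \<bullet> asc Y I A"
    using asc_nat[of "idm Y" "iv e" "idm A"] facts by simp
  have s6: "asc Y I A \<bullet> (iv (ru Y) \<diamond> idm A) = idm Y \<diamond> iv (lu A)" using tri_inv facts by simp
  have n7: "asc Y A I \<bullet> (idm (Y \<odot> A) \<diamond> \<alpha>) = (idm Y \<diamond> (idm A \<diamond> \<alpha>)) \<bullet> asc Y A (B \<odot> A)"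
    using asc_nat[of "idm Y" "idm A" \<alpha>] facts \<alpha>m by simp
  have s7: "iv (asc Y A I) \<bullet> (idm Y \<diamond> (idm A \<diamond> \<alpha>)) = (idm (Y \<odot> A) \<diamond> \<alpha>) \<bullet> iv (asc Y A (B \<odot> A))"
    by (rule sq_inv[OF _ _ _ _ _ _ _ _ n7]) (use facts \<alpha>m in simp_all)
  have s9: "iv (asc Y A I) \<bullet> (idm Y \<diamond> iv (ru A)) = iv (ru (Y \<odot> A))"
  proof -
    have "iv ((idm Y \<diamond> ru A) \<bullet> asc Y A I) = iv (ru (Y \<odot> A))" using kelly facts by simp
    then show ?thesis using facts by simp
  qed
  have n10: "ru X \<bullet> (iv f \<diamond> idm I) = iv f \<bullet> ru (Y \<odot> A)" using ru_nat[of "iv f"] facts by simp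
  have s10: "iv (ru X) \<bullet> iv f = (iv f \<diamond> idm I) \<bullet> iv (ru (Y \<odot> A))"
    by (rule sq_inv[OF _ _ _ _ _ _ _ _ n10]) (use facts in simp_all)
  have E1: "(idm X \<diamond> \<alpha>) \<bullet> (asc X B A \<bullet> ((g \<diamond> idm A) \<bullet> f)) = iv (ru X)"
  proof -
    have "(idm X \<diamond> \<alpha>) \<bullet> (asc X B A \<bullet> ((g \<diamond> idm A) \<bullet> f)) =
      (idm X \<diamond> \<alpha>) \<bullet> (asc X B A \<bullet> (((iv f \<diamond> idm B) \<diamond> idm A) \<bullet> ((iv (asc Y A B) \<diamond> idm A) \<bullet> (((idm Y \<diamond> iv e) \<diamond> idm A) \<bullet> ((iv (ru Y) \<diamond> idm A) \<bullet> f)))))"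
      unfolding s1 using facts by simp
    also have "\<dots> = (idm X \<diamond> \<alpha>) \<bullet> ((iv f \<diamond> idm (B \<odot> A)) \<bullet> (asc (Y \<odot> A) B A \<bullet> ((iv (asc Y A B) \<diamond> idm A) \<bullet> (((idm Y \<diamond> iv e) \<diamond> idm A) \<bullet> ((iv (ru Y) \<diamond> idm A) \<bullet> f)))))"
      using facts by (simp add: kk[OF s2])
    also have "\<dots> = (iv f \<diamond> idm I) \<bullet> ((idm (Y \<odot> A) \<diamond> \<alpha>) \<bullet> (asc (Y \<odot> A) B A \<bullet> ((iv (asc Y A B) \<diamond> idm A) \<bullet> (((idm Y \<diamond> iv e) \<diamond> idm A) \<bullet> ((iv (ru Y) \<diamond> idm A) \<bullet> f)))))"
      using facts \<alpha>m by (simp add: kk[OF s3])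
    also have "\<dots> = (iv f \<diamond> idm I) \<bullet> ((idm (Y \<odot> A) \<diamond> \<alpha>) \<bullet> (iv (asc Y A (B \<odot> A)) \<bullet> ((idm Y \<diamond> asc A B A) \<bullet> (asc Y (A \<odot> B) A \<bullet> (((idm Y \<diamond> iv e) \<diamond> idm A) \<bullet> ((iv (ru Y) \<diamond> idm A) \<bullet> f))))))"
      using facts \<alpha>m by (simp add: kk[OF s4])
    also have "\<dots> = (iv f \<diamond> idm I) \<bullet> ((idm (Y \<odot> A) \<diamond> \<alpha>) \<bullet> (iv (asc Y A (B \<odot> A)) \<bullet> ((idm Y \<diamond> asc A B A) \<bullet> ((idm Y \<diamond> (iv e \<diamond> idm A)) \<bullet> (asc Y I A \<bullet> ((iv (ru Y) \<diamond> idm A) \<bullet> f))))))"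
      using facts \<alpha>m by (simp add: kk[OF s5])
    also have "\<dots> = (iv f \<diamond> idm I) \<bullet> ((idm (Y \<odot> A) \<diamond> \<alpha>) \<bullet> (iv (asc Y A (B \<odot> A)) \<bullet> ((idm Y \<diamond> asc A B A) \<bullet> ((idm Y \<diamond> (iv e \<diamond> idm A)) \<bullet> ((idm Y \<diamond> iv (lu A)) \<bullet> f)))))"
      using facts \<alpha>m by (simp add: kk1[OF s6])
    also have "\<dots> = (iv f \<diamond> idm I) \<bullet> (iv (asc Y A I) \<bullet> ((idm Y \<diamond> (idm A \<diamond> \<alpha>)) \<bullet> ((idm Y \<diamond> asc A B A) \<bullet> ((idm Y \<diamond> (iv e \<diamond> idm A)) \<bullet> ((idm Y \<diamond> iv (lu A)) \<bullet> f)))))"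
      using facts \<alpha>m by (simp add: kk[OF s7[symmetric]])
    also have "\<dots> = (iv f \<diamond> idm I) \<bullet> (iv (asc Y A I) \<bullet> ((idm Y \<diamond> ((idm A \<diamond> \<alpha>) \<bullet> \<phi>)) \<bullet> f))"
      unfolding \<phi>_def using facts \<alpha>m by (simp add: merge_k)
    also have "\<dots> = (iv f \<diamond> idm I) \<bullet> (iv (asc Y A I) \<bullet> ((idm Y \<diamond> iv (ru A)) \<bullet> f))"
      by (simp only: s8)
    also have "\<dots> = (iv f \<diamond> idm I) \<bullet> (iv (ru (Y \<odot> A)) \<bullet> f)"
      using facts by (simp add: kk1[OF s9])
    also have "\<dots> = iv (ru X) \<bullet> (iv f \<bullet> f)"
      using facts by (simp add: kk[OF s10[symmetric]])
    also have "\<dots> = iv (ru X)" using facts by simp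
    finally show ?thesis .
  qed
  show ?thesis
    apply (rule exI[of _ B], rule exI[of _ g], rule exI[of _ \<alpha>], rule exI[of _ e])
    using B gm \<alpha>m E1 E2 by simp
qed

lemma split_iso: assumes "f \<in> mor M" "k \<in> mor M" "src M k = tgt M f" "tgt M k = src M f"
  "k \<bullet> f = idm (src M f)" "isoi (f \<bullet> k)"
  shows "isoi f"
proof -
  define r where "r = k \<bullet> iv (f \<bullet> k)"
  have rm: "r \<in> mor M" "src M r = tgt M f" "tgt M r = src M f" unfolding r_def using assms by simp_all
  have fr: "f \<bullet> r = idm (tgt M f)" unfolding r_def using assms
    by (subst assoc[symmetric]) simp_all
  have "r = (k \<bullet> f) \<bullet> r" using assms(5) rm by simp
  also have "\<dots> = k \<bullet> (f \<bullet> r)" by (rule assoc) (use assms rm in simp_all)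
  also have "\<dots> = k" using fr assms by simp
  finally have "r = k" .
  then have "f \<bullet> k = idm (tgt M f)" using fr by simp
  then show ?thesis by (rule iso_intro[OF assms(1-5)])
qed

lemma P_data_iso:
  assumes o: "X \<in> ob M" "Y \<in> ob M" "A \<in> ob M" "B \<in> ob M"
    and f: "f \<in> mor M" "src M f = X" "tgt M f = Y \<odot> A"
    and g: "g \<in> mor M" "src M g = Y" "tgt M g = X \<odot> B"
    and a: "\<alpha> \<in> mor M" "src M \<alpha> = B \<odot> A" "tgt M \<alpha> = I" "isoi \<alpha>"
    and a': "\<alpha>' \<in> mor M" "src M \<alpha>' = A \<odot> B" "tgt M \<alpha>' = I" "isoi \<alpha>'"
    and E1: "(idm X \<diamond> \<alpha>) \<bullet> (asc X B A \<bullet> ((g \<diamond> idm A) \<bullet> f)) = iv (ru X)"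
    and E2: "(idm Y \<diamond> \<alpha>') \<bullet> (asc Y A B \<bullet> ((f \<diamond> idm B) \<bullet> g)) = iv (ru Y)"
  shows "isoi f"
proof -
  note facts = o f g a a'
  define k where "k = ru X \<bullet> ((idm X \<diamond> \<alpha>) \<bullet> (asc X B A \<bullet> (g \<diamond> idm A)))"
  have km: "k \<in> mor M" "src M k = Y \<odot> A" "tgt M k = X" unfolding k_def using facts by simp_all
  have kf: "k \<bullet> f = idm X"
  proof -
    have "k \<bullet> f = ru X \<bullet> ((idm X \<diamond> \<alpha>) \<bullet> (asc X B A \<bullet> ((g \<diamond> idm A) \<bullet> f)))" unfolding k_def using facts by simp
    also have "\<dots> = idm X" using E1 facts by simp
    finally show ?thesis .
  qed
  have w1: "asc Y A B \<bullet> ((f \<diamond> idm B) \<bullet> g) = iv (idm Y \<diamond> \<alpha>') \<bullet> iv (ru Y)"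
    by (rule nat_cancel2[OF _ _ _ E2]) (use facts in simp_all)
  have w: "(f \<diamond> idm B) \<bullet> g = iv (asc Y A B) \<bullet> (iv (idm Y \<diamond> \<alpha>') \<bullet> iv (ru Y))"
    by (rule nat_cancel2[OF _ _ _ w1]) (use facts in simp_all)
  have n1: "ru (Y \<odot> A) \<bullet> (f \<diamond> idm I) = f \<bullet> ru X" using ru_nat[of f] facts by simp
  have n2: "(f \<diamond> idm I) \<bullet> (idm X \<diamond> \<alpha>) = (idm (Y \<odot> A) \<diamond> \<alpha>) \<bullet> (f \<diamond> idm (B \<odot> A))" using facts by (simp add: merge)
  have n3: "(f \<diamond> idm (B \<odot> A)) \<bullet> asc X B A = asc (Y \<odot> A) B A \<bullet> ((f \<diamond> idm B) \<diamond> idm A)"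
    using asc_nat[of f "idm B" "idm A"] facts by simp
  have "f \<bullet> k = (f \<bullet> ru X) \<bullet> ((idm X \<diamond> \<alpha>) \<bullet> (asc X B A \<bullet> (g \<diamond> idm A)))" unfolding k_def using facts by simp
  also have "\<dots> = ru (Y \<odot> A) \<bullet> ((f \<diamond> idm I) \<bullet> ((idm X \<diamond> \<alpha>) \<bullet> (asc X B A \<bullet> (g \<diamond> idm A))))"
    unfolding n1[symmetric] using facts by simp
  also have "\<dots> = ru (Y \<odot> A) \<bullet> ((idm (Y \<odot> A) \<diamond> \<alpha>) \<bullet> ((f \<diamond> idm (B \<odot> A)) \<bullet> (asc X B A \<bullet> (g \<diamond> idm A))))"
    using facts by (simp add: kk[OF n2])
  also have "\<dots> = ru (Y \<odot> A) \<bullet> ((idm (Y \<odot> A) \<diamond> \<alpha>) \<bullet> (asc (Y \<odot> A) B A \<bullet> (((f \<diamond> idm B) \<diamond> idm A) \<bullet> (g \<diamond> idm A))))"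
    using facts by (simp add: kk[OF n3])
  also have "\<dots> = ru (Y \<odot> A) \<bullet> ((idm (Y \<odot> A) \<diamond> \<alpha>) \<bullet> (asc (Y \<odot> A) B A \<bullet> (((f \<diamond> idm B) \<bullet> g) \<diamond> idm A)))"
    using facts by (simp add: merge)
  also have "\<dots> = ru (Y \<odot> A) \<bullet> ((idm (Y \<odot> A) \<diamond> \<alpha>) \<bullet> (asc (Y \<odot> A) B A \<bullet> ((iv (asc Y A B) \<bullet> (iv (idm Y \<diamond> \<alpha>') \<bullet> iv (ru Y))) \<diamond> idm A)))"
    by (simp only: w)
  finally have fk: "f \<bullet> k = ru (Y \<odot> A) \<bullet> ((idm (Y \<odot> A) \<diamond> \<alpha>) \<bullet> (asc (Y \<odot> A) B A \<bullet> ((iv (asc Y A B) \<bullet> (iv (idm Y \<diamond> \<alpha>') \<bullet> iv (ru Y))) \<diamond> idm A)))" .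
  have fki: "isoi (f \<bullet> k)" unfolding fk using facts by simp
  show ?thesis by (rule split_iso[OF f(1) km(1) _ _ _ fki]) (use km kf facts in simp_all)
qed

lemma Pcls_mem: "(A', f') \<in> Pcls M X Y A f \<longleftrightarrow> wi A' \<and> f' \<in> mor M \<and> src M f' = X \<and> tgt M f' = Y \<odot> A' \<and>
    (\<exists>\<alpha>. \<alpha> \<in> mor M \<and> src M \<alpha> = A \<and> tgt M \<alpha> = A' \<and> isoi \<alpha> \<and> (idm Y \<diamond> \<alpha>) \<bullet> f = f')"
  unfolding Pcls_def hom_in_def by auto

lemma Pcls_refl: assumes "wi A" "Y \<in> ob M" "f \<in> mor M" "src M f = X" "tgt M f = Y \<odot> A"
  shows "(A, f) \<in> Pcls M X Y A f"
  unfolding Pcls_mem using assms wi_ob[OF assms(1)] by (intro conjI exI[of _ "idm A"]) simp_all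

lemma Pcls_eq: assumes A: "wi A" and o: "Y \<in> ob M" and f: "f \<in> mor M" "src M f = X" "tgt M f = Y \<odot> A"
  and m: "(A', f') \<in> Pcls M X Y A f"
  shows "Pcls M X Y A' f' = Pcls M X Y A f"
proof -
  obtain \<alpha> where a: "\<alpha> \<in> mor M" "src M \<alpha> = A" "tgt M \<alpha> = A'" "isoi \<alpha>" "(idm Y \<diamond> \<alpha>) \<bullet> f = f'"
    and A': "wi A'" using m unfolding Pcls_mem by blast
  have oA: "A \<in> ob M" "A' \<in> ob M" using A A' wi_ob by auto
  have "\<forall>A'' f''. ((A'', f'') \<in> Pcls M X Y A' f') = ((A'', f'') \<in> Pcls M X Y A f)"
  proof (intro allI)
    fix A'' f''
    show "((A'', f'') \<in> Pcls M X Y A' f') = ((A'', f'') \<in> Pcls M X Y A f)"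
    proof
      assume "(A'', f'') \<in> Pcls M X Y A' f'"
      then obtain \<beta> where b: "\<beta> \<in> mor M" "src M \<beta> = A'" "tgt M \<beta> = A''" "isoi \<beta>" "(idm Y \<diamond> \<beta>) \<bullet> f' = f''"
        and r: "wi A''" "f'' \<in> mor M" "src M f'' = X" "tgt M f'' = Y \<odot> A''" unfolding Pcls_mem by blast
      have "(idm Y \<diamond> (\<beta> \<bullet> \<alpha>)) \<bullet> f = f''"
        unfolding b(5)[symmetric] a(5)[symmetric] using a(1-4) b(1-4) o f by (simp add: merge_k)
      then show "(A'', f'') \<in> Pcls M X Y A f" unfolding Pcls_mem using r a b
        by (intro conjI exI[of _ "\<beta> \<bullet> \<alpha>"]) simp_all
    next
      assume "(A'', f'') \<in> Pcls M X Y A f"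
      then obtain \<beta> where b: "\<beta> \<in> mor M" "src M \<beta> = A" "tgt M \<beta> = A''" "isoi \<beta>" "(idm Y \<diamond> \<beta>) \<bullet> f = f''"
        and r: "wi A''" "f'' \<in> mor M" "src M f'' = X" "tgt M f'' = Y \<odot> A''" unfolding Pcls_mem by blast
      have "(idm Y \<diamond> (\<beta> \<bullet> iv \<alpha>)) \<bullet> f' = f''"
        unfolding b(5)[symmetric] a(5)[symmetric] using a(1-4) b(1-4) o f by (simp add: merge_k)
      then show "(A'', f'') \<in> Pcls M X Y A' f'" unfolding Pcls_mem using r a b
        by (intro conjI exI[of _ "\<beta> \<bullet> iv \<alpha>"]) simp_all
    qed
  qed
  then show ?thesis by (simp add: set_eq_iff split_paired_All)
qed

lemma rep_in: "c \<noteq> {} \<Longrightarrow> rep c \<in> c" unfolding rep_def by (rule someI_ex) blast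

lemma Pcls_rep: assumes "wi A" "Y \<in> ob M" "f \<in> mor M" "src M f = X" "tgt M f = Y \<odot> A"
  shows "rep (Pcls M X Y A f) \<in> Pcls M X Y A f"
  by (rule rep_in) (use Pcls_refl[OF assms] in blast)

lemma Pcls_eq_iff: assumes "wi A" "Y \<in> ob M" "f \<in> mor M" "src M f = X" "tgt M f = Y \<odot> A"
  and "wi A'" "f' \<in> mor M" "src M f' = X" "tgt M f' = Y \<odot> A'"
  shows "Pcls M X Y A' f' = Pcls M X Y A f \<longleftrightarrow> (A', f') \<in> Pcls M X Y A f"
proof
  assume "Pcls M X Y A' f' = Pcls M X Y A f"
  then show "(A', f') \<in> Pcls M X Y A f" using Pcls_refl[OF assms(6,2,7,8,9)] by simp
qed (rule Pcls_eq[OF assms(1-5)])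

lemma Pcmp_rep: assumes o: "X \<in> ob M" "Y \<in> ob M" "Z \<in> ob M" and A: "wi A" and B: "wi B"
  and f: "f \<in> mor M" "src M f = X" "tgt M f = Y \<odot> A"
  and g: "g \<in> mor M" "src M g = Y" "tgt M g = Z \<odot> B"
  shows "Pcmp M (Y, Z, Pcls M Y Z B g) (X, Y, Pcls M X Y A f) =
     (X, Z, Pcls M X Z (B \<odot> A) (asc Z B A \<bullet> ((g \<diamond> idm A) \<bullet> f)))"
proof -
  obtain A1 f1 where r1: "rep (Pcls M X Y A f) = (A1, f1)" by (cases "rep (Pcls M X Y A f)")
  obtain B1 g1 where r2: "rep (Pcls M Y Z B g) = (B1, g1)" by (cases "rep (Pcls M Y Z B g)")
  have m1: "(A1, f1) \<in> Pcls M X Y A f" using Pcls_rep[OF A o(2) f] r1 by simp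
  have m2: "(B1, g1) \<in> Pcls M Y Z B g" using Pcls_rep[OF B o(3) g] r2 by simp
  obtain \<alpha> where a: "\<alpha> \<in> mor M" "src M \<alpha> = A" "tgt M \<alpha> = A1" "isoi \<alpha>" "(idm Y \<diamond> \<alpha>) \<bullet> f = f1"
    and A1: "wi A1" using m1 unfolding Pcls_mem by blast
  obtain \<beta> where b: "\<beta> \<in> mor M" "src M \<beta> = B" "tgt M \<beta> = B1" "isoi \<beta>" "(idm Z \<diamond> \<beta>) \<bullet> g = g1"
    and B1: "wi B1" using m2 unfolding Pcls_mem by blast
  have oA: "A \<in> ob M" "B \<in> ob M" "A1 \<in> ob M" "B1 \<in> ob M" using A B A1 B1 wi_ob by auto
  note facts = o f g a(1-4) b(1-4) oA
  have hm: "asc Z B A \<bullet> ((g \<diamond> idm A) \<bullet> f) \<in> mor M" "src M (asc Z B A \<bullet> ((g \<diamond> idm A) \<bullet> f)) = X"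
     "tgt M (asc Z B A \<bullet> ((g \<diamond> idm A) \<bullet> f)) = Z \<odot> (B \<odot> A)" using facts by simp_all
  have n: "asc Z B1 A1 \<bullet> ((idm Z \<diamond> \<beta>) \<diamond> \<alpha>) = (idm Z \<diamond> (\<beta> \<diamond> \<alpha>)) \<bullet> asc Z B A"
    using asc_nat[of "idm Z" \<beta> \<alpha>] facts by simp
  have e1: "(((idm Z \<diamond> \<beta>) \<bullet> g) \<diamond> idm A1) \<bullet> ((idm Y \<diamond> \<alpha>) \<bullet> f) = ((idm Z \<diamond> \<beta>) \<diamond> \<alpha>) \<bullet> ((g \<diamond> idm A) \<bullet> f)"
    using facts by (simp add: merge_k)
  have eq: "(idm Z \<diamond> (\<beta> \<diamond> \<alpha>)) \<bullet> (asc Z B A \<bullet> ((g \<diamond> idm A) \<bullet> f)) = asc Z B1 A1 \<bullet> ((g1 \<diamond> idm A1) \<bullet> f1)"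
  proof -
    have "asc Z B1 A1 \<bullet> ((g1 \<diamond> idm A1) \<bullet> f1) = asc Z B1 A1 \<bullet> ((((idm Z \<diamond> \<beta>) \<bullet> g) \<diamond> idm A1) \<bullet> ((idm Y \<diamond> \<alpha>) \<bullet> f))"
      using a(5) b(5) by simp
    also have "\<dots> = asc Z B1 A1 \<bullet> (((idm Z \<diamond> \<beta>) \<diamond> \<alpha>) \<bullet> ((g \<diamond> idm A) \<bullet> f))" by (simp only: e1)
    also have "\<dots> = (idm Z \<diamond> (\<beta> \<diamond> \<alpha>)) \<bullet> (asc Z B A \<bullet> ((g \<diamond> idm A) \<bullet> f))"
      by (rule kk[OF n]) (use facts in simp_all)
    finally show ?thesis by (rule sym)
  qed
  have mem: "(B1 \<odot> A1, asc Z B1 A1 \<bullet> ((g1 \<diamond> idm A1) \<bullet> f1)) \<in> Pcls M X Z (B \<odot> A) (asc Z B A \<bullet> ((g \<diamond> idm A) \<bullet> f))"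
    unfolding Pcls_mem using eq[symmetric] facts wi_tn[OF B1 A1]
    by (intro conjI exI[of _ "\<beta> \<diamond> \<alpha>"]) (simp_all add: eq[symmetric] del: assoc)
  show ?thesis unfolding Pcmp_def Let_def using r1 r2 Pcls_eq[OF wi_tn[OF B A] o(3) hm mem] by simp
qed

lemma Pmor_iff: "p \<in> Pmor M \<longleftrightarrow> (\<exists>X Y A f. p = (X, Y, Pcls M X Y A f) \<and> X \<in> ob M \<and> Y \<in> ob M \<and> wi A \<and>
    f \<in> mor M \<and> src M f = X \<and> tgt M f = Y \<odot> A)"
  unfolding Pmor_def hom_in_def by auto

lemma PCat_simps: "ob (PCat M) = ob M" "mor (PCat M) = Pmor M" "src (PCat M) = fst" "tgt (PCat M) = (\<lambda>p. fst (snd p))"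
  "cmp (PCat M) = Pcmp M" "ident (PCat M) = Pid M" "otens (PCat M) = otens M"
  unfolding PCat_def by simp_all

lemma Pid_eq: "Pid M X = (X, X, Pcls M X X I (iv (ru X)))" unfolding Pid_def by simp

lemma P_iso_iff: assumes o: "X \<in> ob M" "Y \<in> ob M"
  shows "isomorphic (PCat M) X Y \<longleftrightarrow> (\<exists>A. wi A \<and> isomorphic M X (Y \<odot> A))"
proof
  assume "\<exists>A. wi A \<and> isomorphic M X (Y \<odot> A)"
  then obtain A f where A: "wi A" and f: "f \<in> mor M" "src M f = X" "tgt M f = Y \<odot> A" "isoi f"
    by (auto elim!: isoE)
  obtain B g \<alpha> \<alpha>' where B: "wi B" and g: "g \<in> mor M" "src M g = Y" "tgt M g = X \<odot> B"
    and a: "\<alpha> \<in> mor M" "src M \<alpha> = B \<odot> A" "tgt M \<alpha> = I" "isoi \<alpha>" "(idm X \<diamond> \<alpha>) \<bullet> (asc X B A \<bullet> ((g \<diamond> idm A) \<bullet> f)) = iv (ru X)"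
    and a': "\<alpha>' \<in> mor M" "src M \<alpha>' = A \<odot> B" "tgt M \<alpha>' = I" "isoi \<alpha>'" "(idm Y \<diamond> \<alpha>') \<bullet> (asc Y A B \<bullet> ((f \<diamond> idm B) \<bullet> g)) = iv (ru Y)"
    using P_inv_data[OF o A f] by blast
  have oA: "A \<in> ob M" "B \<in> ob M" using A B wi_ob by auto
  define p where "p = (X, Y, Pcls M X Y A f)"
  define q where "q = (Y, X, Pcls M Y X B g)"
  have pm: "p \<in> Pmor M" unfolding p_def Pmor_iff using o A f by blast
  have qm: "q \<in> Pmor M" unfolding q_def Pmor_iff using o B g by blast
  have c1: "Pcmp M q p = Pid M X"
  proof -
    have "Pcmp M q p = (X, X, Pcls M X X (B \<odot> A) (asc X B A \<bullet> ((g \<diamond> idm A) \<bullet> f)))"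
      unfolding p_def q_def by (rule Pcmp_rep[OF o(1) o(2) o(1) A B f(1-3) g])
    also have "\<dots> = Pid M X" unfolding Pid_eq
    proof (simp, rule Pcls_eq[symmetric])
      show "(I, iv (ru X)) \<in> Pcls M X X (B \<odot> A) (asc X B A \<bullet> ((g \<diamond> idm A) \<bullet> f))"
        unfolding Pcls_mem using wi_unit o oA f g a(1-4) a(5)[symmetric]
        by (intro conjI exI[of _ \<alpha>]) simp_all
    qed (use wi_tn[OF B A] o oA f g in simp_all)
    finally show ?thesis .
  qed
  have c2: "Pcmp M p q = Pid M Y"
  proof -
    have "Pcmp M p q = (Y, Y, Pcls M Y Y (A \<odot> B) (asc Y A B \<bullet> ((f \<diamond> idm B) \<bullet> g)))"
      unfolding p_def q_def by (rule Pcmp_rep[OF o(2) o(1) o(2) B A g f(1-3)])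
    also have "\<dots> = Pid M Y" unfolding Pid_eq
    proof (simp, rule Pcls_eq[symmetric])
      show "(I, iv (ru Y)) \<in> Pcls M Y Y (A \<odot> B) (asc Y A B \<bullet> ((f \<diamond> idm B) \<bullet> g))"
        unfolding Pcls_mem using wi_unit o oA f g a'(1-4) a'(5)[symmetric]
        by (intro conjI exI[of _ \<alpha>']) simp_all
    qed (use wi_tn[OF A B] o oA f g in simp_all)
    finally show ?thesis .
  qed
  have "hom_in (PCat M) p X Y" unfolding hom_in_def PCat_simps p_def using pm p_def by simp
  moreover have "iso_in (PCat M) p" unfolding iso_in_def PCat_simps using pm qm c1 c2
    by (intro conjI bexI[of _ q]) (simp_all add: p_def q_def)
  ultimately show "isomorphic (PCat M) X Y" unfolding isomorphic_def by blast
next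
  assume "isomorphic (PCat M) X Y"
  then obtain p where h: "hom_in (PCat M) p X Y" and i: "iso_in (PCat M) p" unfolding isomorphic_def by blast
  from h obtain A f where p: "p = (X, Y, Pcls M X Y A f)" and A: "wi A" and f: "f \<in> mor M" "src M f = X" "tgt M f = Y \<odot> A"
    unfolding hom_in_def PCat_simps Pmor_iff by auto
  from i obtain q where qm: "q \<in> Pmor M" and q1: "fst q = Y" "fst (snd q) = X"
    and c1: "Pcmp M q p = Pid M X" and c2: "Pcmp M p q = Pid M Y"
    unfolding iso_in_def PCat_simps p by auto
  from qm obtain Y' X' B g where q': "q = (Y', X', Pcls M Y' X' B g)" and B: "wi B" and g': "g \<in> mor M" "src M g = Y'" "tgt M g = X' \<odot> B"
    unfolding Pmor_iff by blast
  have YX: "Y' = Y" "X' = X" using q' q1 by auto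
  have q: "q = (Y, X, Pcls M Y X B g)" and g: "g \<in> mor M" "src M g = Y" "tgt M g = X \<odot> B"
    using q' g' unfolding YX by auto
  have oA: "A \<in> ob M" "B \<in> ob M" using A B wi_ob by auto
  have e1: "Pcls M X X I (iv (ru X)) = Pcls M X X (B \<odot> A) (asc X B A \<bullet> ((g \<diamond> idm A) \<bullet> f))"
    using c1 unfolding p q Pid_eq Pcmp_rep[OF o(1) o(2) o(1) A B f g] by simp
  have e2: "Pcls M Y Y I (iv (ru Y)) = Pcls M Y Y (A \<odot> B) (asc Y A B \<bullet> ((f \<diamond> idm B) \<bullet> g))"
    using c2 unfolding p q Pid_eq Pcmp_rep[OF o(2) o(1) o(2) B A g f] by simp
  have m1: "(I, iv (ru X)) \<in> Pcls M X X (B \<odot> A) (asc X B A \<bullet> ((g \<diamond> idm A) \<bullet> f))"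
    using e1 Pcls_refl[OF wi_unit o(1), of "iv (ru X)" X] o by simp
  have m2: "(I, iv (ru Y)) \<in> Pcls M Y Y (A \<odot> B) (asc Y A B \<bullet> ((f \<diamond> idm B) \<bullet> g))"
    using e2 Pcls_refl[OF wi_unit o(2), of "iv (ru Y)" Y] o by simp
  obtain \<alpha> where a: "\<alpha> \<in> mor M" "src M \<alpha> = B \<odot> A" "tgt M \<alpha> = I" "isoi \<alpha>"
     "(idm X \<diamond> \<alpha>) \<bullet> (asc X B A \<bullet> ((g \<diamond> idm A) \<bullet> f)) = iv (ru X)" using m1 unfolding Pcls_mem by blast
  obtain \<alpha>' where a': "\<alpha>' \<in> mor M" "src M \<alpha>' = A \<odot> B" "tgt M \<alpha>' = I" "isoi \<alpha>'"
     "(idm Y \<diamond> \<alpha>') \<bullet> (asc Y A B \<bullet> ((f \<diamond> idm B) \<bullet> g)) = iv (ru Y)" using m2 unfolding Pcls_mem by blast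
  have "isoi f" by (rule P_data_iso[OF o oA f g a(1-4) a'(1-4) a(5) a'(5)])
  then show "\<exists>A. wi A \<and> isomorphic M X (Y \<odot> A)" using A f isoI by blast
qed

definition Peq where "Peq X Y \<longleftrightarrow> X \<in> ob M \<and> Y \<in> ob M \<and> (\<exists>A. wi A \<and> isomorphic M X (Y \<odot> A))"

lemma P_isomorphic: "isomorphic (PCat M) X Y \<longleftrightarrow> Peq X Y"
proof -
  have "isomorphic (PCat M) X Y \<Longrightarrow> X \<in> ob M \<and> Y \<in> ob M"
    unfolding isomorphic_def hom_in_def PCat_simps Pmor_iff by auto
  then show ?thesis unfolding Peq_def using P_iso_iff by blast
qed

lemma Peq_refl: "X \<in> ob M \<Longrightarrow> Peq X X"
  unfolding Peq_def using wi_unit iso_sym[OF iso_ru] by blast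

lemma Peq_of_iso: "isomorphic M X Y \<Longrightarrow> Peq X Y"
  unfolding Peq_def using wi_unit iso_trans[OF _ iso_sym[OF iso_ru]] iso_ob by blast

lemma Peq_sym: assumes "Peq X Y" shows "Peq Y X"
proof -
  obtain A where A: "wi A" "isomorphic M X (Y \<odot> A)" and o: "X \<in> ob M" "Y \<in> ob M" using assms unfolding Peq_def by blast
  obtain B where B: "wi B" "isomorphic M (A \<odot> B) I" "isomorphic M (B \<odot> A) I" using A(1) by (rule wi_invE)
  have oA: "A \<in> ob M" "B \<in> ob M" using A B wi_ob by auto
  have "isomorphic M Y (Y \<odot> I)" using iso_sym[OF iso_ru] o by blast
  also have "isomorphic M \<dots> (Y \<odot> (A \<odot> B))" by (rule iso_tn[OF iso_refl[OF o(2)] iso_sym[OF B(2)]])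
  also have "isomorphic M \<dots> ((Y \<odot> A) \<odot> B)" by (rule iso_sym[OF iso_asc]) (use o oA in auto)
  also have "isomorphic M \<dots> (X \<odot> B)" by (rule iso_tn[OF iso_sym[OF A(2)] iso_refl[OF oA(2)]])
  finally show ?thesis unfolding Peq_def using o B(1) by blast
qed

lemma Peq_trans: assumes "Peq X Y" "Peq Y Z" shows "Peq X Z"
proof -
  obtain A where A: "wi A" "isomorphic M X (Y \<odot> A)" and o: "X \<in> ob M" "Y \<in> ob M" using assms(1) unfolding Peq_def by blast
  obtain B where B: "wi B" "isomorphic M Y (Z \<odot> B)" and o2: "Z \<in> ob M" using assms(2) unfolding Peq_def by blast
  have oA: "A \<in> ob M" "B \<in> ob M" using A B wi_ob by auto
  have "isomorphic M X (Y \<odot> A)" by (rule A(2))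
  also have "isomorphic M \<dots> ((Z \<odot> B) \<odot> A)" by (rule iso_tn[OF B(2) iso_refl[OF oA(1)]])
  also have "isomorphic M \<dots> (Z \<odot> (B \<odot> A))" by (rule iso_asc) (use o2 oA in auto)
  finally show ?thesis unfolding Peq_def using o o2 wi_tn[OF B(1) A(1)] by blast
qed

lemma iso_mid4: assumes "X \<in> ob M" "A \<in> ob M" "Y \<in> ob M" "B \<in> ob M"
  shows "isomorphic M ((X \<odot> A) \<odot> (Y \<odot> B)) ((X \<odot> Y) \<odot> (A \<odot> B))"
proof -
  have "isomorphic M ((X \<odot> A) \<odot> (Y \<odot> B)) (X \<odot> (A \<odot> (Y \<odot> B)))" by (rule iso_asc) (use assms in auto)
  also have "isomorphic M \<dots> (X \<odot> ((A \<odot> Y) \<odot> B))" by (rule iso_tn[OF iso_refl iso_sym[OF iso_asc]]) (use assms in auto)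
  also have "isomorphic M \<dots> (X \<odot> ((Y \<odot> A) \<odot> B))" by (rule iso_tn[OF iso_refl iso_tn[OF iso_br iso_refl]]) (use assms in auto)
  also have "isomorphic M \<dots> (X \<odot> (Y \<odot> (A \<odot> B)))" by (rule iso_tn[OF iso_refl iso_asc]) (use assms in auto)
  also have "isomorphic M \<dots> ((X \<odot> Y) \<odot> (A \<odot> B))" by (rule iso_sym[OF iso_asc]) (use assms in auto)
  finally show ?thesis .
qed

lemma Peq_tn: assumes "Peq X X'" "Peq Y Y'" shows "Peq (X \<odot> Y) (X' \<odot> Y')"
proof -
  obtain A where A: "wi A" "isomorphic M X (X' \<odot> A)" and o: "X \<in> ob M" "X' \<in> ob M" using assms(1) unfolding Peq_def by blast
  obtain B where B: "wi B" "isomorphic M Y (Y' \<odot> B)" and o2: "Y \<in> ob M" "Y' \<in> ob M" using assms(2) unfolding Peq_def by blast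
  have oA: "A \<in> ob M" "B \<in> ob M" using A B wi_ob by auto
  have "isomorphic M (X \<odot> Y) ((X' \<odot> A) \<odot> (Y' \<odot> B))" by (rule iso_tn[OF A(2) B(2)])
  also have "isomorphic M \<dots> ((X' \<odot> Y') \<odot> (A \<odot> B))" by (rule iso_mid4) (use o o2 oA in auto)
  finally show ?thesis unfolding Peq_def using o o2 wi_tn[OF A(1) B(1)] by auto
qed

lemma Peq_ob: "Peq X Y \<Longrightarrow> X \<in> ob M" "Peq X Y \<Longrightarrow> Y \<in> ob M" unfolding Peq_def by auto

lemma eqv_good_M: "eqv_good M"
proof -
  have f1: "\<forall>X Y. isomorphic M X Y \<longrightarrow> X \<in> ob M \<and> Y \<in> ob M" using iso_ob by blast
  have f2: "\<forall>X\<in>ob M. isomorphic M X X" using iso_refl by blast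
  have f3: "\<forall>X Y. isomorphic M X Y \<longrightarrow> isomorphic M Y X" using iso_sym by blast
  have f4: "\<forall>X Y Z. isomorphic M X Y \<longrightarrow> isomorphic M Y Z \<longrightarrow> isomorphic M X Z" by (intro allI impI, rule iso_trans)
  have f5: "\<forall>X\<in>ob M. \<forall>Y\<in>ob M. otens M X Y \<in> ob M" by simp
  have f6: "\<forall>X X' Y Y'. isomorphic M X X' \<longrightarrow> isomorphic M Y Y' \<longrightarrow> isomorphic M (otens M X Y) (otens M X' Y')"
    by (intro allI impI, rule iso_tn)
  show ?thesis unfolding eqv_good_def using f1 f2 f3 f4 f5 f6 by (intro conjI) assumption+
qed

lemma eqv_good_P: "eqv_good (PCat M)"
proof -
  have f1: "\<forall>X Y. Peq X Y \<longrightarrow> X \<in> ob M \<and> Y \<in> ob M" using Peq_ob by blast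
  have f2: "\<forall>X\<in>ob M. Peq X X" using Peq_refl by blast
  have f3: "\<forall>X Y. Peq X Y \<longrightarrow> Peq Y X" using Peq_sym by blast
  have f4: "\<forall>X Y Z. Peq X Y \<longrightarrow> Peq Y Z \<longrightarrow> Peq X Z" by (intro allI impI, rule Peq_trans)
  have f5: "\<forall>X\<in>ob M. \<forall>Y\<in>ob M. otens M X Y \<in> ob M" by simp
  have f6: "\<forall>X X' Y Y'. Peq X X' \<longrightarrow> Peq Y Y' \<longrightarrow> Peq (otens M X Y) (otens M X' Y')"
    by (intro allI impI, rule Peq_tn)
  show ?thesis unfolding eqv_good_def P_isomorphic PCat_simps using f1 f2 f3 f4 f5 f6 by (intro conjI) assumption+
qed

lemma Pic_simps: "ob (PicCat M) = {A. wi A}" "otens (PicCat M) = otens M"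
  "mor (PicCat M) = {f \<in> mor M. isoi f \<and> wi (src M f) \<and> wi (tgt M f)}"
  "src (PicCat M) = src M" "tgt (PicCat M) = tgt M" "cmp (PicCat M) = cmp M" "ident (PicCat M) = ident M"
  unfolding PicCat_def by simp_all

lemma Pic_isomorphic: "isomorphic (PicCat M) X Y \<longleftrightarrow> wi X \<and> wi Y \<and> isomorphic M X Y"
proof
  assume "isomorphic (PicCat M) X Y"
  then obtain f where "hom_in (PicCat M) f X Y" "iso_in (PicCat M) f" unfolding isomorphic_def by blast
  then show "wi X \<and> wi Y \<and> isomorphic M X Y" unfolding hom_in_def Pic_simps using isoI by auto
next
  assume a: "wi X \<and> wi Y \<and> isomorphic M X Y"
  then obtain f where f: "f \<in> mor M" "src M f = X" "tgt M f = Y" "isoi f" by (auto elim!: isoE)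
  have "hom_in (PicCat M) f X Y" unfolding hom_in_def Pic_simps using f a by simp
  moreover have "iso_in (PicCat M) f" unfolding iso_in_def[of "PicCat M"] Pic_simps using f a
    by (intro conjI bexI[of _ "iv f"]) simp_all
  ultimately show "isomorphic (PicCat M) X Y" unfolding isomorphic_def by blast
qed

lemma eqv_good_Pic: "eqv_good (PicCat M)"
proof -
  have f1: "\<forall>X Y. (wi X \<and> wi Y \<and> isomorphic M X Y) \<longrightarrow> X \<in> {A. wi A} \<and> Y \<in> {A. wi A}" by blast
  have f2: "\<forall>X\<in>{A. wi A}. wi X \<and> wi X \<and> isomorphic M X X" using iso_refl wi_ob by blast
  have f3: "\<forall>X Y. (wi X \<and> wi Y \<and> isomorphic M X Y) \<longrightarrow> (wi Y \<and> wi X \<and> isomorphic M Y X)" using iso_sym by blast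
  have f4: "\<forall>X Y Z. (wi X \<and> wi Y \<and> isomorphic M X Y) \<longrightarrow> (wi Y \<and> wi Z \<and> isomorphic M Y Z) \<longrightarrow> (wi X \<and> wi Z \<and> isomorphic M X Z)"
  proof (intro allI impI)
    fix X Y Z assume "wi X \<and> wi Y \<and> isomorphic M X Y" "wi Y \<and> wi Z \<and> isomorphic M Y Z"
    then show "wi X \<and> wi Z \<and> isomorphic M X Z" using iso_trans[of X Y Z] by blast
  qed
  have f5: "\<forall>X\<in>{A. wi A}. \<forall>Y\<in>{A. wi A}. otens M X Y \<in> {A. wi A}" using wi_tn by blast
  have f6: "\<forall>X X' Y Y'. (wi X \<and> wi X' \<and> isomorphic M X X') \<longrightarrow> (wi Y \<and> wi Y' \<and> isomorphic M Y Y') \<longrightarrow>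
     (wi (otens M X Y) \<and> wi (otens M X' Y') \<and> isomorphic M (otens M X Y) (otens M X' Y'))"
    using wi_tn iso_tn by blast
  show ?thesis unfolding eqv_good_def Pic_isomorphic Pic_simps using f1 f2 f3 f4 f5 f6 by (intro conjI) assumption+
qed

lemma Kc: "carrier (Kmon M) = iso_class M ` ob M" by (rule Kmon_carrier[OF eqv_good_M])
lemma Km: "X \<in> ob M \<Longrightarrow> Y \<in> ob M \<Longrightarrow> mult (Kmon M) (iso_class M X) (iso_class M Y) = iso_class M (X \<odot> Y)"
  by (rule Kmon_mult[OF eqv_good_M])
lemma K1: "one (Kmon M) = iso_class M I" by (rule Kmon_one[OF eqv_good_M])
lemma Keq: "X \<in> ob M \<Longrightarrow> iso_class M X = iso_class M Y \<longleftrightarrow> isomorphic M X Y" by (rule ic_eq_iff[OF eqv_good_M])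

lemma Units_K: "Units (Kmon M) = iso_class M ` {A. wi A}"
proof
  show "Units (Kmon M) \<subseteq> iso_class M ` {A. wi A}"
  proof
    fix y assume "y \<in> Units (Kmon M)"
    then obtain x where y: "y \<in> carrier (Kmon M)" and x: "x \<in> carrier (Kmon M)"
      "mult (Kmon M) x y = one (Kmon M)" "mult (Kmon M) y x = one (Kmon M)" unfolding Units_def by blast
    obtain Y Z where YZ: "Y \<in> ob M" "Z \<in> ob M" "y = iso_class M Y" "x = iso_class M Z" using x y unfolding Kc by blast
    have "iso_class M (Z \<odot> Y) = iso_class M I" "iso_class M (Y \<odot> Z) = iso_class M I" using x YZ by (simp_all add: Km K1)
    then have "isomorphic M (Z \<odot> Y) I" "isomorphic M (Y \<odot> Z) I" using Keq YZ by simp_all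
    then have "wi Y" unfolding wi_iff using YZ by blast
    then show "y \<in> iso_class M ` {A. wi A}" using YZ by blast
  qed
next
  show "iso_class M ` {A. wi A} \<subseteq> Units (Kmon M)"
  proof
    fix y assume "y \<in> iso_class M ` {A. wi A}"
    then obtain A where A: "wi A" "y = iso_class M A" by blast
    obtain B where B: "wi B" "isomorphic M (A \<odot> B) I" "isomorphic M (B \<odot> A) I" using A(1) by (rule wi_invE)
    have o: "A \<in> ob M" "B \<in> ob M" using A B wi_ob by auto
    have "mult (Kmon M) (iso_class M B) y = one (Kmon M)" "mult (Kmon M) y (iso_class M B) = one (Kmon M)"
      using A o B by (simp_all add: Km K1 ic_eqI[OF eqv_good_M])
    moreover have "y \<in> carrier (Kmon M)" "iso_class M B \<in> carrier (Kmon M)" unfolding Kc using A o by auto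
    ultimately show "y \<in> Units (Kmon M)" unfolding Units_def by blast
  qed
qed

lemma Peq_iso_l: "isomorphic M X Z \<Longrightarrow> Peq Z Y \<Longrightarrow> Peq X Y"
  using Peq_trans Peq_of_iso by blast

lemma Ucls_K: assumes X: "X \<in> ob M" shows "Ucls (Kmon M) (iso_class M X) = iso_class M ` {Z. Peq Z X}"
proof
  show "Ucls (Kmon M) (iso_class M X) \<subseteq> iso_class M ` {Z. Peq Z X}"
  proof
    fix y assume "y \<in> Ucls (Kmon M) (iso_class M X)"
    then obtain u where y: "y \<in> carrier (Kmon M)" and u: "u \<in> Units (Kmon M)" "y = mult (Kmon M) u (iso_class M X)"
      unfolding Ucls_def by blast
    obtain U where U: "wi U" "u = iso_class M U" using u(1) unfolding Units_K by blast
    have oU: "U \<in> ob M" using U wi_ob by auto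
    have yy: "y = iso_class M (U \<odot> X)" using u U oU X by (simp add: Km)
    have "isomorphic M (U \<odot> X) (X \<odot> U)" using iso_br oU X by simp
    then have "Peq (U \<odot> X) X" unfolding Peq_def using U oU X by auto
    then show "y \<in> iso_class M ` {Z. Peq Z X}" using yy by blast
  qed
next
  show "iso_class M ` {Z. Peq Z X} \<subseteq> Ucls (Kmon M) (iso_class M X)"
  proof
    fix y assume "y \<in> iso_class M ` {Z. Peq Z X}"
    then obtain Z where Z: "Peq Z X" "y = iso_class M Z" by blast
    obtain A where A: "wi A" "isomorphic M Z (X \<odot> A)" and oZ: "Z \<in> ob M" using Z unfolding Peq_def by blast
    have oA: "A \<in> ob M" using A wi_ob by auto
    have "isomorphic M Z (A \<odot> X)" using iso_trans[OF A(2) iso_br[OF X oA]] .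
    then have "y = mult (Kmon M) (iso_class M A) (iso_class M X)" using Z oA X by (simp add: Km ic_eqI[OF eqv_good_M])
    moreover have "iso_class M A \<in> Units (Kmon M)" unfolding Units_K using A by blast
    moreover have "y \<in> carrier (Kmon M)" unfolding Kc using Z oZ by blast
    ultimately show "y \<in> Ucls (Kmon M) (iso_class M X)" unfolding Ucls_def by blast
  qed
qed

lemma Ucls_eq: assumes "X \<in> ob M" "Y \<in> ob M"
  shows "Ucls (Kmon M) (iso_class M X) = Ucls (Kmon M) (iso_class M Y) \<longleftrightarrow> Peq X Y"
proof
  assume "Ucls (Kmon M) (iso_class M X) = Ucls (Kmon M) (iso_class M Y)"
  then have "iso_class M X \<in> iso_class M ` {Z. Peq Z Y}" using Ucls_K assms Peq_refl by blast
  then obtain Z where Z: "Peq Z Y" "iso_class M X = iso_class M Z" by blast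
  then have "isomorphic M X Z" using Keq assms by blast
  then show "Peq X Y" using Z Peq_iso_l by blast
next
  assume "Peq X Y"
  then have "{Z. Peq Z X} = {Z. Peq Z Y}" using Peq_trans Peq_sym by blast
  then show "Ucls (Kmon M) (iso_class M X) = Ucls (Kmon M) (iso_class M Y)" using Ucls_K assms by simp
qed

lemma Ucls_some: assumes "X \<in> ob M"
  obtains Z where "(SOME a. a \<in> Ucls (Kmon M) (iso_class M X)) = iso_class M Z" "Peq Z X"
proof -
  have "iso_class M X \<in> Ucls (Kmon M) (iso_class M X)" using Ucls_K assms Peq_refl by blast
  then have "(SOME a. a \<in> Ucls (Kmon M) (iso_class M X)) \<in> Ucls (Kmon M) (iso_class M X)" by (rule someI)
  then show ?thesis using that Ucls_K assms by auto
qed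

lemma Umod_mult: assumes "X \<in> ob M" "Y \<in> ob M"
  shows "mult (Umod (Kmon M)) (Ucls (Kmon M) (iso_class M X)) (Ucls (Kmon M) (iso_class M Y)) = Ucls (Kmon M) (iso_class M (X \<odot> Y))"
proof -
  obtain Z where Z: "(SOME a. a \<in> Ucls (Kmon M) (iso_class M X)) = iso_class M Z" "Peq Z X" using Ucls_some assms(1) by blast
  obtain W where W: "(SOME a. a \<in> Ucls (Kmon M) (iso_class M Y)) = iso_class M W" "Peq W Y" using Ucls_some assms(2) by blast
  have o: "Z \<in> ob M" "W \<in> ob M" using Z W Peq_ob by auto
  have "mult (Umod (Kmon M)) (Ucls (Kmon M) (iso_class M X)) (Ucls (Kmon M) (iso_class M Y)) = Ucls (Kmon M) (iso_class M (Z \<odot> W))"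
    unfolding Umod_def using Z W o by (simp add: Km)
  also have "\<dots> = Ucls (Kmon M) (iso_class M (X \<odot> Y))" using Ucls_eq o assms Peq_tn[OF Z(2) W(2)] by simp
  finally show ?thesis .
qed

lemma part1: "\<exists>\<phi> \<psi>.
            \<phi> \<in> iso (Kmon (PicCat M)) (units_of (Kmon M)) \<and>
            \<psi> \<in> iso (Kmon (PCat M)) (Umod (Kmon M)) \<and>
            (\<forall>c \<in> carrier (Kmon (PicCat M)). \<phi> c = Kmap (PicCat M) M id c) \<and>
            (\<forall>x \<in> carrier (Kmon M). \<psi> (Kmap M (PCat M) id x) = Ucls (Kmon M) x)"
proof -
  have phi: "Kmap (PicCat M) M id \<in> iso (Kmon (PicCat M)) (units_of (Kmon M))"
  proof (rule Kmap_iso[OF eqv_good_Pic eqv_good_M, where S = "{A. wi A}"])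
    show "\<And>X Y. isomorphic (PicCat M) X Y \<Longrightarrow> isomorphic M (id X) (id Y)" using Pic_isomorphic by simp
    show "\<And>X Y. X \<in> ob (PicCat M) \<Longrightarrow> Y \<in> ob (PicCat M) \<Longrightarrow> isomorphic M (id X) (id Y) \<Longrightarrow> isomorphic (PicCat M) X Y"
      using Pic_isomorphic Pic_simps by simp
    show "\<And>X. X \<in> ob (PicCat M) \<Longrightarrow> id X \<in> {A. wi A}" using Pic_simps by simp
    show "{A. wi A} \<subseteq> ob M" using wi_ob by blast
    show "\<And>Y. Y \<in> {A. wi A} \<Longrightarrow> \<exists>X\<in>ob (PicCat M). isomorphic M (id X) Y" using Pic_simps iso_refl wi_ob by auto
    show "\<And>X Y. X \<in> ob (PicCat M) \<Longrightarrow> Y \<in> ob (PicCat M) \<Longrightarrow> isomorphic M (id (otens (PicCat M) X Y)) (otens M (id X) (id Y))"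
      using Pic_simps iso_refl wi_ob by simp
    show "carrier (units_of (Kmon M)) = iso_class M ` {A. wi A}" unfolding units_of_def using Units_K by simp
    show "mult (units_of (Kmon M)) = mult (Kmon M)" unfolding units_of_def by simp
  qed
  define \<psi> where "\<psi> = (\<lambda>c. Ucls (Kmon M) (Kmap (PCat M) M id c))"
  have KP: "carrier (Kmon (PCat M)) = iso_class (PCat M) ` ob M" using Kmon_carrier[OF eqv_good_P] PCat_simps by simp
  have psi_ic: "\<And>X. X \<in> ob M \<Longrightarrow> \<psi> (iso_class (PCat M) X) = Ucls (Kmon M) (iso_class M X)"
  proof -
    fix X assume X: "X \<in> ob M"
    have "Peq X (SOME x. x \<in> iso_class (PCat M) X)" "(SOME x. x \<in> iso_class (PCat M) X) \<in> ob M"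
      using ic_some[OF eqv_good_P] X PCat_simps P_isomorphic by auto
    then show "\<psi> (iso_class (PCat M) X) = Ucls (Kmon M) (iso_class M X)"
      unfolding \<psi>_def Kmap_def using Ucls_eq X Peq_sym by simp
  qed
  have psi: "\<psi> \<in> iso (Kmon (PCat M)) (Umod (Kmon M))"
  proof -
    have hom: "\<psi> \<in> hom (Kmon (PCat M)) (Umod (Kmon M))"
    proof (rule homI)
      fix x assume "x \<in> carrier (Kmon (PCat M))"
      then obtain X where "X \<in> ob M" "x = iso_class (PCat M) X" unfolding KP by blast
      then show "\<psi> x \<in> carrier (Umod (Kmon M))" using psi_ic unfolding Umod_def Kc by auto
    next
      fix x y assume "x \<in> carrier (Kmon (PCat M))" "y \<in> carrier (Kmon (PCat M))"
      then obtain X Y where XY: "X \<in> ob M" "x = iso_class (PCat M) X" "Y \<in> ob M" "y = iso_class (PCat M) Y" unfolding KP by blast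
      have "mult (Kmon (PCat M)) x y = iso_class (PCat M) (X \<odot> Y)"
        using Kmon_mult[OF eqv_good_P] XY PCat_simps by simp
      then show "\<psi> (x \<otimes>\<^bsub>Kmon (PCat M)\<^esub> y) = \<psi> x \<otimes>\<^bsub>Umod (Kmon M)\<^esub> \<psi> y"
        using XY psi_ic Umod_mult by simp
    qed
    have bij: "bij_betw \<psi> (carrier (Kmon (PCat M))) (carrier (Umod (Kmon M)))"
    proof (rule bij_betw_imageI)
      show "inj_on \<psi> (carrier (Kmon (PCat M)))"
      proof (rule inj_onI)
        fix x y assume "x \<in> carrier (Kmon (PCat M))" "y \<in> carrier (Kmon (PCat M))" "\<psi> x = \<psi> y"
        then obtain X Y where XY: "X \<in> ob M" "x = iso_class (PCat M) X" "Y \<in> ob M" "y = iso_class (PCat M) Y"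
          "Ucls (Kmon M) (iso_class M X) = Ucls (Kmon M) (iso_class M Y)" unfolding KP using psi_ic by auto
        then have "Peq X Y" using Ucls_eq by blast
        then show "x = y" using XY ic_eqI[OF eqv_good_P] P_isomorphic by blast
      qed
      show "\<psi> ` carrier (Kmon (PCat M)) = carrier (Umod (Kmon M))"
        unfolding KP Umod_def Kc using psi_ic by (auto simp: image_image)
    qed
    show ?thesis using hom bij unfolding iso_def by blast
  qed
  have cond: "\<forall>x \<in> carrier (Kmon M). \<psi> (Kmap M (PCat M) id x) = Ucls (Kmon M) x"
  proof
    fix x assume "x \<in> carrier (Kmon M)"
    then obtain X where X: "X \<in> ob M" "x = iso_class M X" unfolding Kc by blast
    have "Kmap M (PCat M) id x = iso_class (PCat M) (id X)"
      unfolding X(2) by (rule Kmap_ic[OF eqv_good_M eqv_good_P]) (use X P_isomorphic Peq_of_iso in auto)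
    then show "\<psi> (Kmap M (PCat M) id x) = Ucls (Kmon M) x" using psi_ic X by simp
  qed
  show ?thesis using phi psi cond by blast
qed

end



locale smeq = M: smc M + N: smc N for M :: "('o,'m) smcat" and N :: "('p,'n) smcat" +
  fixes F :: "('o,'m,'p,'n) smfun"
  assumes eqv: "sym_mon_equiv M N F"
begin

lemma Fall: "\<forall>X\<in>ob M. fob F X \<in> ob N"
  "\<forall>f\<in>mor M. hom_in N (fmor F f) (fob F (src M f)) (fob F (tgt M f))"
  "\<forall>X\<in>ob M. fmor F (ident M X) = ident N (fob F X)"
  "\<forall>f\<in>mor M. \<forall>g\<in>mor M. tgt M f = src M g \<longrightarrow> fmor F (cmp M g f) = cmp N (fmor F g) (fmor F f)"
  "hom_in N (fphi0 F) (unitob N) (fob F (unitob M))" "iso_in N (fphi0 F)"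
  "\<forall>X\<in>ob M. \<forall>Y\<in>ob M. hom_in N (fphi2 F X Y) (otens N (fob F X) (fob F Y)) (fob F (otens M X Y)) \<and> iso_in N (fphi2 F X Y)"
  "\<forall>X \<in> ob M. \<forall>Y \<in> ob M. \<forall>g. hom_in N g (fob F X) (fob F Y) \<longrightarrow> (\<exists>f. hom_in M f X Y \<and> fmor F f = g)"
  "\<forall>X \<in> ob M. \<forall>Y \<in> ob M. \<forall>f f'. hom_in M f X Y \<and> hom_in M f' X Y \<and> fmor F f = fmor F f' \<longrightarrow> f = f'"
  "\<forall>Y \<in> ob N. \<exists>X \<in> ob M. isomorphic N (fob F X) Y"
  by (insert eqv, unfold sym_mon_equiv_def sym_mon_functor_def) simp_all

lemma Fax: "\<And>X. X \<in> ob M \<Longrightarrow> fob F X \<in> ob N"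
  "\<And>f. f \<in> mor M \<Longrightarrow> hom_in N (fmor F f) (fob F (src M f)) (fob F (tgt M f))"
  "\<And>X. X \<in> ob M \<Longrightarrow> fmor F (ident M X) = ident N (fob F X)"
  "\<And>f g. f \<in> mor M \<Longrightarrow> g \<in> mor M \<Longrightarrow> tgt M f = src M g \<Longrightarrow> fmor F (cmp M g f) = cmp N (fmor F g) (fmor F f)"
  "hom_in N (fphi0 F) (unitob N) (fob F (unitob M))" "iso_in N (fphi0 F)"
  "\<And>X Y. X \<in> ob M \<Longrightarrow> Y \<in> ob M \<Longrightarrow> hom_in N (fphi2 F X Y) (otens N (fob F X) (fob F Y)) (fob F (otens M X Y))"
  "\<And>X Y. X \<in> ob M \<Longrightarrow> Y \<in> ob M \<Longrightarrow> iso_in N (fphi2 F X Y)"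
  "\<And>X Y g. X \<in> ob M \<Longrightarrow> Y \<in> ob M \<Longrightarrow> hom_in N g (fob F X) (fob F Y) \<Longrightarrow> (\<exists>f. hom_in M f X Y \<and> fmor F f = g)"
  "\<And>X Y f f'. X \<in> ob M \<Longrightarrow> Y \<in> ob M \<Longrightarrow> hom_in M f X Y \<Longrightarrow> hom_in M f' X Y \<Longrightarrow> fmor F f = fmor F f' \<Longrightarrow> f = f'"
  "\<And>Y. Y \<in> ob N \<Longrightarrow> \<exists>X \<in> ob M. isomorphic N (fob F X) Y"
  using Fall(1) Fall(2) Fall(3) Fall(4) Fall(5) Fall(6) Fall(7) Fall(7) Fall(8) Fall(9) Fall(10)
  by (blast, blast, blast, blast, blast, blast, blast, blast, blast, blast, blast)

lemma Fmor: "f \<in> mor M \<Longrightarrow> fmor F f \<in> mor N" "f \<in> mor M \<Longrightarrow> src N (fmor F f) = fob F (src M f)"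
  "f \<in> mor M \<Longrightarrow> tgt N (fmor F f) = fob F (tgt M f)"
  using Fax(2) unfolding hom_in_def by auto

lemma F_iso_resp: assumes "isomorphic M X Y" shows "isomorphic N (fob F X) (fob F Y)"
proof -
  obtain f where f0: "f \<in> mor M" "src M f = X" "tgt M f = Y" "iso_in M f" using assms by (rule M.isoE)
  have f: "f \<in> mor M" "src M f = X" "tgt M f = Y" "iso_in M f" "X \<in> ob M" "Y \<in> ob M" using f0 by auto
  have "iso_in N (fmor F f)"
  proof (rule N.iso_intro[of _ "fmor F (inv_in M f)"])
    show "cmp N (fmor F (inv_in M f)) (fmor F f) = ident N (src N (fmor F f))"
      using f by (simp add: Fax(4)[symmetric] Fax(3) Fmor)
    show "cmp N (fmor F f) (fmor F (inv_in M f)) = ident N (tgt N (fmor F f))"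
      using f by (simp add: Fax(4)[symmetric] Fax(3) Fmor)
  qed (use f in \<open>simp_all add: Fmor\<close>)
  then show ?thesis using f by (intro N.isoI[of "fmor F f"]) (simp_all add: Fmor)
qed

lemma F_iso_refl: assumes o: "X \<in> ob M" "Y \<in> ob M" and i: "isomorphic N (fob F X) (fob F Y)"
  shows "isomorphic M X Y"
proof -
  obtain h where h: "h \<in> mor N" "src N h = fob F X" "tgt N h = fob F Y" "iso_in N h" using i by (rule N.isoE)
  obtain f where f: "hom_in M f X Y" "fmor F f = h" using Fax(9)[OF o, of h] h unfolding hom_in_def by auto
  obtain g where g: "hom_in M g Y X" "fmor F g = inv_in N h" using Fax(9)[OF o(2) o(1), of "inv_in N h"] h unfolding hom_in_def by auto
  have fm: "f \<in> mor M" "src M f = X" "tgt M f = Y" and gm: "g \<in> mor M" "src M g = Y" "tgt M g = X"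
    using f g unfolding hom_in_def by auto
  have 1: "cmp M g f = ident M X"
  proof (rule Fax(10)[OF o(1) o(1)])
    show "fmor F (cmp M g f) = fmor F (ident M X)" using fm gm f g h o by (simp add: Fax(4) Fax(3))
  qed (use fm gm o in \<open>simp_all add: hom_in_def\<close>)
  have 2: "cmp M f g = ident M Y"
  proof (rule Fax(10)[OF o(2) o(2)])
    show "fmor F (cmp M f g) = fmor F (ident M Y)" using fm gm f g h o by (simp add: Fax(4) Fax(3))
  qed (use fm gm o in \<open>simp_all add: hom_in_def\<close>)
  have "iso_in M f" by (rule M.iso_intro[OF fm(1) gm(1)]) (use fm gm 1 2 in simp_all)
  then show ?thesis using fm by (intro M.isoI[of f]) simp_all
qed

lemma F_tn: assumes "X \<in> ob M" "Y \<in> ob M" shows "isomorphic N (fob F (otens M X Y)) (otens N (fob F X) (fob F Y))"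
  by (rule N.iso_sym[OF N.isoI[OF Fax(8)[OF assms]]]) (use Fax(7)[OF assms] in \<open>simp_all add: hom_in_def\<close>)

lemma F_unit: "isomorphic N (fob F (unitob M)) (unitob N)"
  by (rule N.iso_sym[OF N.isoI[OF Fax(6)]]) (use Fax(5) in \<open>simp_all add: hom_in_def\<close>)

lemma F_wi: assumes "M.wi A" shows "N.wi (fob F A)"
proof -
  obtain B where B: "M.wi B" "isomorphic M (otens M A B) (unitob M)" "isomorphic M (otens M B A) (unitob M)"
    using assms by (rule M.wi_invE)
  have o: "A \<in> ob M" "B \<in> ob M" using assms B M.wi_ob by auto
  have "isomorphic N (otens N (fob F A) (fob F B)) (fob F (otens M A B))" by (rule N.iso_sym[OF F_tn[OF o]])
  also have "isomorphic N \<dots> (fob F (unitob M))" by (rule F_iso_resp[OF B(2)])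
  also have "isomorphic N \<dots> (unitob N)" by (rule F_unit)
  finally have 1: "isomorphic N (otens N (fob F A) (fob F B)) (unitob N)" .
  have "isomorphic N (otens N (fob F B) (fob F A)) (fob F (otens M B A))" by (rule N.iso_sym[OF F_tn[OF o(2) o(1)]])
  also have "isomorphic N \<dots> (fob F (unitob M))" by (rule F_iso_resp[OF B(3)])
  also have "isomorphic N \<dots> (unitob N)" by (rule F_unit)
  finally have 2: "isomorphic N (otens N (fob F B) (fob F A)) (unitob N)" .
  show ?thesis unfolding N.wi_iff using 1 2 o Fax(1) by blast
qed

lemma F_wi_refl: assumes X: "X \<in> ob M" and w: "N.wi (fob F X)" shows "M.wi X"
proof -
  obtain B' where B': "N.wi B'" "isomorphic N (otens N (fob F X) B') (unitob N)" "isomorphic N (otens N B' (fob F X)) (unitob N)"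
    using w by (rule N.wi_invE)
  have oB': "B' \<in> ob N" using B' N.wi_ob by auto
  obtain B where B: "B \<in> ob M" "isomorphic N (fob F B) B'" using Fax(11)[OF oB'] by blast
  have oF: "fob F X \<in> ob N" "fob F B \<in> ob N" using Fax(1) X B by auto
  have "isomorphic N (fob F (otens M X B)) (otens N (fob F X) (fob F B))" by (rule F_tn[OF X B(1)])
  also have "isomorphic N \<dots> (otens N (fob F X) B')" by (rule N.iso_tn[OF N.iso_refl[OF oF(1)] B(2)])
  also have "isomorphic N \<dots> (unitob N)" by (rule B'(2))
  also have "isomorphic N \<dots> (fob F (unitob M))" by (rule N.iso_sym[OF F_unit])
  finally have 1: "isomorphic M (otens M X B) (unitob M)" by (rule F_iso_refl[rotated 2]) (use X B in simp_all)
  have "isomorphic N (fob F (otens M B X)) (otens N (fob F B) (fob F X))" by (rule F_tn[OF B(1) X])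
  also have "isomorphic N \<dots> (otens N B' (fob F X))" by (rule N.iso_tn[OF B(2) N.iso_refl[OF oF(1)]])
  also have "isomorphic N \<dots> (unitob N)" by (rule B'(3))
  also have "isomorphic N \<dots> (fob F (unitob M))" by (rule N.iso_sym[OF F_unit])
  finally have 2: "isomorphic M (otens M B X) (unitob M)" by (rule F_iso_refl[rotated 2]) (use X B in simp_all)
  show ?thesis unfolding M.wi_iff using 1 2 X B by blast
qed

lemma F_Peq: assumes o: "X \<in> ob M" "Y \<in> ob M" shows "N.Peq (fob F X) (fob F Y) \<longleftrightarrow> M.Peq X Y"
proof
  assume "M.Peq X Y"
  then obtain A where A: "M.wi A" "isomorphic M X (otens M Y A)" unfolding M.Peq_def by blast
  have oA: "A \<in> ob M" using A M.wi_ob by auto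
  have "isomorphic N (fob F X) (fob F (otens M Y A))" by (rule F_iso_resp[OF A(2)])
  also have "isomorphic N \<dots> (otens N (fob F Y) (fob F A))" by (rule F_tn[OF o(2) oA])
  finally show "N.Peq (fob F X) (fob F Y)" unfolding N.Peq_def using F_wi[OF A(1)] Fax(1) o by blast
next
  assume "N.Peq (fob F X) (fob F Y)"
  then obtain A' where A': "N.wi A'" "isomorphic N (fob F X) (otens N (fob F Y) A')" unfolding N.Peq_def by blast
  have oA': "A' \<in> ob N" using A' N.wi_ob by auto
  obtain A where A: "A \<in> ob M" "isomorphic N (fob F A) A'" using Fax(11)[OF oA'] by blast
  have wA: "M.wi A" using F_wi_refl[OF A(1) N.wi_iso[OF A'(1) N.iso_sym[OF A(2)]]] .
  have oF: "fob F Y \<in> ob N" using Fax(1) o by auto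
  have "isomorphic N (fob F X) (otens N (fob F Y) A')" by (rule A'(2))
  also have "isomorphic N \<dots> (otens N (fob F Y) (fob F A))" by (rule N.iso_tn[OF N.iso_refl[OF oF] N.iso_sym[OF A(2)]])
  also have "isomorphic N \<dots> (fob F (otens M Y A))" by (rule N.iso_sym[OF F_tn[OF o(2) A(1)]])
  finally have "isomorphic M X (otens M Y A)" by (rule F_iso_refl[rotated 2]) (use o A in simp_all)
  then show "M.Peq X Y" unfolding M.Peq_def using wA o by blast
qed

lemma respPic: "isomorphic (PicCat M) X Y \<Longrightarrow> isomorphic (PicCat N) (fob F X) (fob F Y)"
proof -
  assume "isomorphic (PicCat M) X Y"
  then have h: "M.wi X" "M.wi Y" "isomorphic M X Y" unfolding M.Pic_isomorphic by simp_all
  have "N.wi (fob F X)" "N.wi (fob F Y)" using F_wi h by simp_all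
  moreover have "isomorphic N (fob F X) (fob F Y)" by (rule F_iso_resp[OF h(3)])
  ultimately show ?thesis unfolding N.Pic_isomorphic by simp
qed

lemma reflPic: "X \<in> ob (PicCat M) \<Longrightarrow> Y \<in> ob (PicCat M) \<Longrightarrow> isomorphic (PicCat N) (fob F X) (fob F Y) \<Longrightarrow> isomorphic (PicCat M) X Y"
proof -
  assume a: "X \<in> ob (PicCat M)" "Y \<in> ob (PicCat M)" "isomorphic (PicCat N) (fob F X) (fob F Y)"
  then have w: "M.wi X" "M.wi Y" unfolding M.Pic_simps by simp_all
  have o: "X \<in> ob M" "Y \<in> ob M" using w M.wi_ob by simp_all
  have "isomorphic N (fob F X) (fob F Y)" using a(3) unfolding N.Pic_isomorphic by simp
  then have "isomorphic M X Y" by (rule F_iso_refl[OF o])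
  then show ?thesis unfolding M.Pic_isomorphic using w by simp
qed

lemma essPic: "N.wi Y \<Longrightarrow> \<exists>X\<in>ob (PicCat M). isomorphic (PicCat N) (fob F X) Y"
proof -
  assume Y: "N.wi Y"
  have oY: "Y \<in> ob N" using Y N.wi_ob by simp
  obtain X where X: "X \<in> ob M" "isomorphic N (fob F X) Y" using Fax(11)[OF oY] by blast
  have "N.wi (fob F X)" by (rule N.wi_iso[OF Y N.iso_sym[OF X(2)]])
  then have w: "M.wi X" by (rule F_wi_refl[OF X(1)])
  have "isomorphic (PicCat N) (fob F X) Y" unfolding N.Pic_isomorphic using F_wi[OF w] Y X(2) by simp
  then show ?thesis using w unfolding M.Pic_simps by blast
qed

lemma tnPic: "X \<in> ob (PicCat M) \<Longrightarrow> Y \<in> ob (PicCat M) \<Longrightarrow>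
       isomorphic (PicCat N) (fob F (otens (PicCat M) X Y)) (otens (PicCat N) (fob F X) (fob F Y))"
proof -
  assume a: "X \<in> ob (PicCat M)" "Y \<in> ob (PicCat M)"
  then have w: "M.wi X" "M.wi Y" unfolding M.Pic_simps by simp_all
  have o: "X \<in> ob M" "Y \<in> ob M" using w M.wi_ob by simp_all
  have "N.wi (fob F (otens M X Y))" by (rule F_wi[OF M.wi_tn[OF w]])
  moreover have "N.wi (otens N (fob F X) (fob F Y))" by (rule N.wi_tn[OF F_wi[OF w(1)] F_wi[OF w(2)]])
  moreover have "isomorphic N (fob F (otens M X Y)) (otens N (fob F X) (fob F Y))" by (rule F_tn[OF o])
  ultimately show ?thesis unfolding N.Pic_isomorphic M.Pic_simps N.Pic_simps by simp
qed

lemma respP: "isomorphic (PCat M) X Y \<Longrightarrow> isomorphic (PCat N) (fob F X) (fob F Y)"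
proof -
  assume "isomorphic (PCat M) X Y"
  then have h: "M.Peq X Y" unfolding M.P_isomorphic .
  have o: "X \<in> ob M" "Y \<in> ob M" using M.Peq_ob[OF h] by simp_all
  show ?thesis unfolding N.P_isomorphic F_Peq[OF o] by (rule h)
qed

lemma reflP: "X \<in> ob (PCat M) \<Longrightarrow> Y \<in> ob (PCat M) \<Longrightarrow> isomorphic (PCat N) (fob F X) (fob F Y) \<Longrightarrow> isomorphic (PCat M) X Y"
proof -
  assume a: "X \<in> ob (PCat M)" "Y \<in> ob (PCat M)" "isomorphic (PCat N) (fob F X) (fob F Y)"
  have o: "X \<in> ob M" "Y \<in> ob M" using a(1,2) unfolding M.PCat_simps .
  show ?thesis using a(3) unfolding N.P_isomorphic F_Peq[OF o] M.P_isomorphic .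
qed

lemma essP: "Y \<in> ob N \<Longrightarrow> \<exists>X\<in>ob (PCat M). isomorphic (PCat N) (fob F X) Y"
proof -
  assume Y: "Y \<in> ob N"
  obtain X where X: "X \<in> ob M" "isomorphic N (fob F X) Y" using Fax(11)[OF Y] by blast
  have "isomorphic (PCat N) (fob F X) Y" unfolding N.P_isomorphic by (rule N.Peq_of_iso[OF X(2)])
  then show ?thesis using X(1) unfolding M.PCat_simps by blast
qed

lemma tnP: "X \<in> ob (PCat M) \<Longrightarrow> Y \<in> ob (PCat M) \<Longrightarrow>
       isomorphic (PCat N) (fob F (otens (PCat M) X Y)) (otens (PCat N) (fob F X) (fob F Y))"
proof -
  assume a: "X \<in> ob (PCat M)" "Y \<in> ob (PCat M)"
  have o: "X \<in> ob M" "Y \<in> ob M" using a unfolding M.PCat_simps .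
  show ?thesis unfolding N.P_isomorphic M.PCat_simps N.PCat_simps by (rule N.Peq_of_iso[OF F_tn[OF o]])
qed

lemma part2:
  "Kmap (PicCat M) (PicCat N) (fob F) \<in> iso (Kmon (PicCat M)) (Kmon (PicCat N)) \<and>
   Kmap M N (fob F) \<in> iso (Kmon M) (Kmon N) \<and>
   Kmap (PCat M) (PCat N) (fob F) \<in> iso (Kmon (PCat M)) (Kmon (PCat N)) \<and>
   (\<forall>c \<in> carrier (Kmon (PicCat M)).
      Kmap (PicCat N) N id (Kmap (PicCat M) (PicCat N) (fob F) c) = Kmap M N (fob F) (Kmap (PicCat M) M id c)) \<and>
   (\<forall>x \<in> carrier (Kmon M).
      Kmap (PCat M) (PCat N) (fob F) (Kmap M (PCat M) id x) = Kmap N (PCat N) id (Kmap M N (fob F) x))"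
proof (intro conjI)
  show "Kmap (PicCat M) (PicCat N) (fob F) \<in> iso (Kmon (PicCat M)) (Kmon (PicCat N))"
  proof (rule Kmap_iso[OF M.eqv_good_Pic N.eqv_good_Pic, where S = "{A. N.wi A}"])
    show "\<And>X Y. isomorphic (PicCat M) X Y \<Longrightarrow> isomorphic (PicCat N) (fob F X) (fob F Y)" by (rule respPic)
    show "\<And>X Y. X \<in> ob (PicCat M) \<Longrightarrow> Y \<in> ob (PicCat M) \<Longrightarrow> isomorphic (PicCat N) (fob F X) (fob F Y) \<Longrightarrow> isomorphic (PicCat M) X Y"
      by (rule reflPic)
    show "\<And>X Y. X \<in> ob (PicCat M) \<Longrightarrow> Y \<in> ob (PicCat M) \<Longrightarrow>
       isomorphic (PicCat N) (fob F (otens (PicCat M) X Y)) (otens (PicCat N) (fob F X) (fob F Y))" by (rule tnPic)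
    show "\<And>X. X \<in> ob (PicCat M) \<Longrightarrow> fob F X \<in> {A. N.wi A}" unfolding M.Pic_simps using F_wi by simp
    show "{A. N.wi A} \<subseteq> ob (PicCat N)" unfolding N.Pic_simps by (rule subset_refl)
    show "\<And>Y. Y \<in> {A. N.wi A} \<Longrightarrow> \<exists>X\<in>ob (PicCat M). isomorphic (PicCat N) (fob F X) Y" using essPic by simp
    show "carrier (Kmon (PicCat N)) = iso_class (PicCat N) ` {A. N.wi A}"
      using Kmon_carrier[OF N.eqv_good_Pic] unfolding N.Pic_simps .
    show "mult (Kmon (PicCat N)) = mult (Kmon (PicCat N))" by (rule refl)
  qed
  show "Kmap M N (fob F) \<in> iso (Kmon M) (Kmon N)"
  proof (rule Kmap_iso[OF M.eqv_good_M N.eqv_good_M, where S = "ob N"])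
    show "\<And>X Y. isomorphic M X Y \<Longrightarrow> isomorphic N (fob F X) (fob F Y)" by (rule F_iso_resp)
    show "\<And>X Y. X \<in> ob M \<Longrightarrow> Y \<in> ob M \<Longrightarrow> isomorphic N (fob F X) (fob F Y) \<Longrightarrow> isomorphic M X Y"
      by (rule F_iso_refl)
    show "ob N \<subseteq> ob N" by (rule subset_refl)
    show "\<And>X. X \<in> ob M \<Longrightarrow> fob F X \<in> ob N" by (rule Fax(1))
    show "\<And>Y. Y \<in> ob N \<Longrightarrow> \<exists>X\<in>ob M. isomorphic N (fob F X) Y" by (rule Fax(11))
    show "\<And>X Y. X \<in> ob M \<Longrightarrow> Y \<in> ob M \<Longrightarrow> isomorphic N (fob F (otens M X Y)) (otens N (fob F X) (fob F Y))" by (rule F_tn)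
    show "carrier (Kmon N) = iso_class N ` ob N" by (rule N.Kc)
    show "mult (Kmon N) = mult (Kmon N)" by (rule refl)
  qed
  show "Kmap (PCat M) (PCat N) (fob F) \<in> iso (Kmon (PCat M)) (Kmon (PCat N))"
  proof (rule Kmap_iso[OF M.eqv_good_P N.eqv_good_P, where S = "ob N"])
    show "\<And>X Y. isomorphic (PCat M) X Y \<Longrightarrow> isomorphic (PCat N) (fob F X) (fob F Y)" by (rule respP)
    show "\<And>X Y. X \<in> ob (PCat M) \<Longrightarrow> Y \<in> ob (PCat M) \<Longrightarrow> isomorphic (PCat N) (fob F X) (fob F Y) \<Longrightarrow> isomorphic (PCat M) X Y"
      by (rule reflP)
    show "\<And>X Y. X \<in> ob (PCat M) \<Longrightarrow> Y \<in> ob (PCat M) \<Longrightarrow>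
       isomorphic (PCat N) (fob F (otens (PCat M) X Y)) (otens (PCat N) (fob F X) (fob F Y))" by (rule tnP)
    show "\<And>X. X \<in> ob (PCat M) \<Longrightarrow> fob F X \<in> ob N" unfolding M.PCat_simps by (rule Fax(1))
    show "ob N \<subseteq> ob (PCat N)" unfolding N.PCat_simps by (rule subset_refl)
    show "\<And>Y. Y \<in> ob N \<Longrightarrow> \<exists>X\<in>ob (PCat M). isomorphic (PCat N) (fob F X) Y" by (rule essP)
    show "carrier (Kmon (PCat N)) = iso_class (PCat N) ` ob N"
      using Kmon_carrier[OF N.eqv_good_P] unfolding N.PCat_simps .
    show "mult (Kmon (PCat N)) = mult (Kmon (PCat N))" by (rule refl)
  qed
  show "\<forall>c \<in> carrier (Kmon (PicCat M)).
      Kmap (PicCat N) N id (Kmap (PicCat M) (PicCat N) (fob F) c) = Kmap M N (fob F) (Kmap (PicCat M) M id c)"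
  proof
    fix c assume "c \<in> carrier (Kmon (PicCat M))"
    then obtain A where A: "M.wi A" "c = iso_class (PicCat M) A"
      using Kmon_carrier[OF M.eqv_good_Pic] unfolding M.Pic_simps by blast
    have oA: "A \<in> ob M" using A M.wi_ob by simp
    have AP: "A \<in> ob (PicCat M)" unfolding M.Pic_simps using A by simp
    have wF: "N.wi (fob F A)" by (rule F_wi[OF A(1)])
    have 1: "Kmap (PicCat M) (PicCat N) (fob F) c = iso_class (PicCat N) (fob F A)"
      unfolding A(2) by (rule Kmap_ic[OF M.eqv_good_Pic N.eqv_good_Pic respPic AP])
    have 2: "Kmap (PicCat N) N id (iso_class (PicCat N) (fob F A)) = iso_class N (id (fob F A))"
    proof (rule Kmap_ic[OF N.eqv_good_Pic N.eqv_good_M])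
      show "\<And>X Y. isomorphic (PicCat N) X Y \<Longrightarrow> isomorphic N (id X) (id Y)" unfolding N.Pic_isomorphic by simp
      show "fob F A \<in> ob (PicCat N)" unfolding N.Pic_simps using wF by simp
    qed
    have 3: "Kmap (PicCat M) M id c = iso_class M (id A)"
    proof (unfold A(2), rule Kmap_ic[OF M.eqv_good_Pic M.eqv_good_M])
      show "\<And>X Y. isomorphic (PicCat M) X Y \<Longrightarrow> isomorphic M (id X) (id Y)" unfolding M.Pic_isomorphic by simp
    qed (rule AP)
    have 4: "Kmap M N (fob F) (iso_class M A) = iso_class N (fob F A)"
      by (rule Kmap_ic[OF M.eqv_good_M N.eqv_good_M F_iso_resp oA])
    show "Kmap (PicCat N) N id (Kmap (PicCat M) (PicCat N) (fob F) c) = Kmap M N (fob F) (Kmap (PicCat M) M id c)"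
      unfolding 1 2 3 4 id_apply ..
  qed
  show "\<forall>x \<in> carrier (Kmon M).
      Kmap (PCat M) (PCat N) (fob F) (Kmap M (PCat M) id x) = Kmap N (PCat N) id (Kmap M N (fob F) x)"
  proof
    fix x assume "x \<in> carrier (Kmon M)"
    then obtain X where X: "X \<in> ob M" "x = iso_class M X" unfolding M.Kc by blast
    have FX: "fob F X \<in> ob N" by (rule Fax(1)[OF X(1)])
    have XP: "X \<in> ob (PCat M)" unfolding M.PCat_simps by (rule X(1))
    have 1: "Kmap M (PCat M) id x = iso_class (PCat M) (id X)"
    proof (unfold X(2), rule Kmap_ic[OF M.eqv_good_M M.eqv_good_P])
      show "\<And>U V. isomorphic M U V \<Longrightarrow> isomorphic (PCat M) (id U) (id V)" unfolding M.P_isomorphic id_apply by (rule M.Peq_of_iso)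
    qed (rule X(1))
    have 2: "Kmap (PCat M) (PCat N) (fob F) (iso_class (PCat M) X) = iso_class (PCat N) (fob F X)"
      by (rule Kmap_ic[OF M.eqv_good_P N.eqv_good_P respP XP])
    have 3: "Kmap M N (fob F) x = iso_class N (fob F X)"
      unfolding X(2) by (rule Kmap_ic[OF M.eqv_good_M N.eqv_good_M F_iso_resp X(1)])
    have 4: "Kmap N (PCat N) id (iso_class N (fob F X)) = iso_class (PCat N) (id (fob F X))"
    proof (rule Kmap_ic[OF N.eqv_good_M N.eqv_good_P])
      show "\<And>U V. isomorphic N U V \<Longrightarrow> isomorphic (PCat N) (id U) (id V)" unfolding N.P_isomorphic id_apply by (rule N.Peq_of_iso)
    qed (rule FX)
    show "Kmap (PCat M) (PCat N) (fob F) (Kmap M (PCat M) id x) = Kmap N (PCat N) id (Kmap M N (fob F) x)"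
      unfolding 1 3 4 id_apply 2 ..
  qed
qed

end

lemma part2_ext:
  assumes "sym_mon_cat M" "sym_mon_cat N" "sym_mon_equiv M N F"
  shows "Kmap (PicCat M) (PicCat N) (fob F) \<in> iso (Kmon (PicCat M)) (Kmon (PicCat N)) \<and>
   Kmap M N (fob F) \<in> iso (Kmon M) (Kmon N) \<and>
   Kmap (PCat M) (PCat N) (fob F) \<in> iso (Kmon (PCat M)) (Kmon (PCat N)) \<and>
   (\<forall>c \<in> carrier (Kmon (PicCat M)).
      Kmap (PicCat N) N id (Kmap (PicCat M) (PicCat N) (fob F) c) = Kmap M N (fob F) (Kmap (PicCat M) M id c)) \<and>
   (\<forall>x \<in> carrier (Kmon M).
      Kmap (PCat M) (PCat N) (fob F) (Kmap M (PCat M) id x) = Kmap N (PCat N) id (Kmap M N (fob F) x))"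
  by (rule smeq.part2[OF smeq.intro[OF smc.intro[OF assms(1)] smc.intro[OF assms(2)] smeq_axioms.intro[OF assms(3)]]])

theorem proposition8p1:
  fixes M :: "('o, 'm) smcat"
  assumes "sym_mon_cat M"
  shows "(\<exists>\<phi> \<psi>.
            \<phi> \<in> iso (Kmon (PicCat M)) (units_of (Kmon M)) \<and>
            \<psi> \<in> iso (Kmon (PCat M)) (Umod (Kmon M)) \<and>
            (\<forall>c \<in> carrier (Kmon (PicCat M)). \<phi> c = Kmap (PicCat M) M id c) \<and>
            (\<forall>x \<in> carrier (Kmon M). \<psi> (Kmap M (PCat M) id x) = Ucls (Kmon M) x))
       \<and> (\<forall>(N :: ('p, 'n) smcat) (F :: ('o, 'm, 'p, 'n) smfun).
            sym_mon_cat N \<and> sym_mon_equiv M N F \<longrightarrow>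
              Kmap (PicCat M) (PicCat N) (fob F) \<in> iso (Kmon (PicCat M)) (Kmon (PicCat N)) \<and>
              Kmap M N (fob F) \<in> iso (Kmon M) (Kmon N) \<and>
              Kmap (PCat M) (PCat N) (fob F) \<in> iso (Kmon (PCat M)) (Kmon (PCat N)) \<and>
              (\<forall>c \<in> carrier (Kmon (PicCat M)).
                 Kmap (PicCat N) N id (Kmap (PicCat M) (PicCat N) (fob F) c)
                 = Kmap M N (fob F) (Kmap (PicCat M) M id c)) \<and>
              (\<forall>x \<in> carrier (Kmon M).
                 Kmap (PCat M) (PCat N) (fob F) (Kmap M (PCat M) id x)
                 = Kmap N (PCat N) id (Kmap M N (fob F) x)))"
  by (rule conjI[OF smc.part1[OF smc.intro[OF assms]]], intro allI impI, erule conjE, rule part2_ext[OF assms])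


end
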